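(* Let $\mathcal J$ be the real vector space of polynomial maps $\mathbb R^2\to\mathbb R^2$ of degree $\le 4$ with vanishing constant term, and let $\mathcal J^1\subset\mathcal J$ be the subset of those elements whose linear term has rank exactly $1$. Let $G$ be the group of polynomial maps $\mathbb R^2\to\mathbb R^2$ of degree $\le4$ with vanishing constant term and invertible linear term, with group law given by composition followed by truncation to degree $\le 4$. Let $N\subset\mathcal J^1$ be the submanifold of those $f$ of the form $f(x,y)=(x,f_2(x,y))$ where $f_2$ has vanishing constant and linear terms. Then the map $$G\times N\times G\to\mathcal J^1,\qquad (\varphi,f,\psi)\mapsto \varphi\circ f\circ\psi\ \text{(truncated to degree}\le 4),$$ is a (smooth) fiber bundle.
   Context: Composition of polynomial maps with vanishing constant terms is always followed by truncation to degree $\le 4$. The group $G\times G^{op}$ acts on $\mathcal J$ by $(\varphi,\psi)\cdot f=\varphi f\psi$. *)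

theory Defs
  imports "HOL-Analysis.Analysis"
begin

text \<open>Iterated directional (Frechet) derivatives: all of them exist and are continuous
  on the open set U iff f is C-infinity on U.\<close>
fun Cdir :: "'a::real_normed_vector list \<Rightarrow> 'a set \<Rightarrow> ('a \<Rightarrow> 'b::real_normed_vector) \<Rightarrow> bool" where
  "Cdir [] U f = continuous_on U f"
| "Cdir (v # vs) U f =
     ((\<forall>x\<in>U. f differentiable (at x)) \<and> Cdir vs U (\<lambda>x. frechet_derivative f (at x) v))"

definition smooth_on :: "'a::real_normed_vector set \<Rightarrow> ('a \<Rightarrow> 'b::real_normed_vector) \<Rightarrow> bool" where
  "smooth_on U f \<longleftrightarrow> open U \<and> (\<forall>vs. Cdir vs U f)"

definition smooth_map :: "'a::real_normed_vector set \<Rightarrow> ('a \<Rightarrow> 'b::real_normed_vector) \<Rightarrow> bool" where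
  "smooth_map S f \<longleftrightarrow>
     (\<forall>x\<in>S. \<exists>U g. open U \<and> x \<in> U \<and> smooth_on U g \<and> (\<forall>y\<in>S \<inter> U. g y = f y))"

definition diffeo_betw :: "'a::real_normed_vector set \<Rightarrow> 'b::real_normed_vector set \<Rightarrow> ('a \<Rightarrow> 'b) \<Rightarrow> bool" where
  "diffeo_betw S T h \<longleftrightarrow> bij_betw h S T \<and> smooth_map S h \<and> smooth_map T (inv_into S h)"

text \<open>The fibre is taken inside the ambient space of E
  (no loss of generality: it is diffeomorphic to a fibre of \<pi>).\<close>
definition fiber_bundle :: "'a::euclidean_space set \<Rightarrow> 'b::euclidean_space set \<Rightarrow> ('a \<Rightarrow> 'b) \<Rightarrow> bool" where
  "fiber_bundle E B p \<longleftrightarrow>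
     p ` E = B \<and> smooth_map E p \<and>
     (\<forall>b\<in>B. \<exists>U (F::'a set) h.
        openin (top_of_set B) U \<and> b \<in> U \<and>
        diffeo_betw (E \<inter> p -` U) (U \<times> F) h \<and>
        (\<forall>e\<in>E \<inter> p -` U. fst (h e) = p e))"

text \<open>Index (c,i,j): coefficient of x^i y^j in the component c (c = 0 or 1).\<close>
definition jidx_set :: "(nat \<times> nat \<times> nat) set" where
  "jidx_set = {(c,i,j). c < 2 \<and> 1 \<le> i + j \<and> i + j \<le> 4}"

typedef jidx = jidx_set
  by (rule exI[of _ "(0,1,0)"]) (simp add: jidx_set_def)

lemma finite_jidx_set: "finite jidx_set"
proof -
  have "jidx_set \<subseteq> {..<2} \<times> {..4} \<times> {..4}" by (auto simp: jidx_set_def)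
  then show ?thesis by (rule finite_subset) auto
qed

instance jidx :: finite
proof
  have "(UNIV :: jidx set) = Abs_jidx ` jidx_set"
    by (metis Rep_jidx Rep_jidx_inverse image_eqI subsetI subset_antisym UNIV_I)
  then show "finite (UNIV :: jidx set)" using finite_jidx_set by (metis finite_imageI)
qed

type_synonym jet = "real ^ jidx"

definition coef :: "jet \<Rightarrow> nat \<Rightarrow> nat \<Rightarrow> nat \<Rightarrow> real" where
  "coef f c i j = (if (c,i,j) \<in> jidx_set then f $ Abs_jidx (c,i,j) else 0)"

text \<open>Build a jet from coefficient arrays, truncating to degrees 1..4.\<close>
definition mkjet :: "(nat \<Rightarrow> nat \<Rightarrow> nat \<Rightarrow> real) \<Rightarrow> jet" where
  "mkjet P = (\<chi> k. case Rep_jidx k of (c,i,j) \<Rightarrow> P c i j)"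

text \<open>Bivariate polynomials as coefficient arrays (i,j) for x^i y^j.\<close>
type_synonym bpoly = "nat \<Rightarrow> nat \<Rightarrow> real"

definition pmul :: "bpoly \<Rightarrow> bpoly \<Rightarrow> bpoly" where
  "pmul p q = (\<lambda>i j. \<Sum>a\<le>i. \<Sum>b\<le>j. p a b * q (i - a) (j - b))"

primrec ppow :: "bpoly \<Rightarrow> nat \<Rightarrow> bpoly" where
  "ppow p 0 = (\<lambda>i j. if i = 0 \<and> j = 0 then 1 else 0)"
| "ppow p (Suc n) = pmul p (ppow p n)"

definition jmonos :: "(nat \<times> nat) set" where
  "jmonos = {(a,b). 1 \<le> a + b \<and> a + b \<le> 4}"

definition jcomp :: "jet \<Rightarrow> jet \<Rightarrow> jet" where
  "jcomp \<phi> f = mkjet (\<lambda>c i j.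
     \<Sum>(a,b)\<in>jmonos. coef \<phi> c a b * pmul (ppow (coef f 0) a) (ppow (coef f 1) b) i j)"

text \<open>Matrix of the linear term: row = output component, column = input variable (x,y).\<close>
definition linpart :: "jet \<Rightarrow> real ^ 2 ^ 2" where
  "linpart f = (\<chi> r s. coef f (if r = 1 then 0 else 1)
                               (if s = 1 then 1 else 0) (if s = 1 then 0 else 1))"

definition J1 :: "jet set" where
  "J1 = {f. rank (linpart f) = 1}"

definition Gjet :: "jet set" where
  "Gjet = {\<phi>. invertible (linpart \<phi>)}"

definition Njet :: "jet set" where
  "Njet = {f. coef f 0 1 0 = 1 \<and> (\<forall>i j. (i,j) \<noteq> (1,0) \<longrightarrow> coef f 0 i j = 0)
              \<and> coef f 1 1 0 = 0 \<and> coef f 1 0 1 = 0}"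

end

theory Submission
  imports Defs "HOL-Computational_Algebra.Formal_Power_Series"
begin


type_synonym ser = "real fps fps"

abbreviation cf :: "ser \<Rightarrow> nat \<Rightarrow> nat \<Rightarrow> real" where
  "cf P i j \<equiv> fps_nth (fps_nth P j) i"

definition emb :: "bpoly \<Rightarrow> ser" where
  "emb p = Abs_fps (\<lambda>j. Abs_fps (\<lambda>i. p i j))"

lemma emb_nth[simp]: "cf (emb p) i j = p i j"
  by (simp add: emb_def)

lemma ser_eqI: "(\<And>i j. cf P i j = cf Q i j) \<Longrightarrow> P = Q"
  by (simp add: fps_eq_iff)

lemma ser_mult_nth:
  "cf (P * Q) i j = (\<Sum>b=0..j. \<Sum>a=0..i. cf P a b * cf Q (i - a) (j - b))"
  by (simp add: fps_mult_nth fps_sum_nth)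

lemma emb_pmul: "emb (pmul p q) = emb p * emb q"
proof (rule ser_eqI)
  fix i j
  show "cf (emb (pmul p q)) i j = cf (emb p * emb q) i j"
    unfolding ser_mult_nth emb_nth pmul_def
    by (subst sum.swap) (simp add: atLeast0AtMost)
qed

lemma emb_ppow: "emb (ppow p n) = emb p ^ n"
proof (induction n)
  case 0
  show ?case by (rule ser_eqI) (simp add: emb_def fps_one_nth)
next
  case (Suc n)
  then show ?case by (simp add: emb_pmul)
qed

definition ordge :: "nat \<Rightarrow> ser \<Rightarrow> bool" where
  "ordge k P \<longleftrightarrow> (\<forall>i j. i + j < k \<longrightarrow> cf P i j = 0)"

lemma ordge_0[simp]: "ordge 0 P" by (simp add: ordge_def)
lemma ordge_zero[simp]: "ordge k 0" by (simp add: ordge_def)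
lemma ordge_mono: "ordge k P \<Longrightarrow> l \<le> k \<Longrightarrow> ordge l P" by (auto simp: ordge_def)
lemma ordge_add: "ordge k P \<Longrightarrow> ordge k Q \<Longrightarrow> ordge k (P + Q)" by (auto simp: ordge_def)
lemma ordge_diff: "ordge k P \<Longrightarrow> ordge k Q \<Longrightarrow> ordge k (P - Q)" by (auto simp: ordge_def)
lemma ordge_uminus: "ordge k P \<Longrightarrow> ordge k (- P)" by (auto simp: ordge_def)
lemma ordge_sum: "(\<And>x. x \<in> A \<Longrightarrow> ordge k (f x)) \<Longrightarrow> ordge k (sum f A)"
  by (induction A rule: infinite_finite_induct) (auto intro: ordge_add)

lemma ordge_mult: "ordge k P \<Longrightarrow> ordge l Q \<Longrightarrow> ordge (k + l) (P * Q)"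
  unfolding ordge_def ser_mult_nth
proof (intro allI impI)
  fix i j assume P: "\<forall>i j. i + j < k \<longrightarrow> cf P i j = 0" and Q: "\<forall>i j. i + j < l \<longrightarrow> cf Q i j = 0"
    and ij: "i + j < k + l"
  show "(\<Sum>b = 0..j. \<Sum>a = 0..i. cf P a b * cf Q (i - a) (j - b)) = 0"
  proof (intro sum.neutral ballI)
    fix b a assume "b \<in> {0..j}" "a \<in> {0..i}"
    then have "a + b < k \<or> (i - a) + (j - b) < l" using ij by auto
    then show "cf P a b * cf Q (i - a) (j - b) = 0" using P Q by auto
  qed
qed

lemma ordge_mult': "ordge k P \<Longrightarrow> ordge l Q \<Longrightarrow> m \<le> k + l \<Longrightarrow> ordge m (P * Q)"
  using ordge_mult ordge_mono by blast

definition K :: "real \<Rightarrow> ser" where "K r = fps_const (fps_const r)"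

lemma K_mult_nth[simp]: "cf (K r * P) i j = r * cf P i j"
  by (simp add: K_def)

lemma ordge_K: "ordge k P \<Longrightarrow> ordge k (K r * P)" by (auto simp: ordge_def)

lemma K_0[simp]: "K 0 = 0" and K_1[simp]: "K 1 = 1" by (simp_all add: K_def)
lemma K_add: "K (a + b) = K a + K b" by (simp add: K_def)
lemma K_mult: "K (a * b) = K a * K b" by (simp add: K_def)
lemma K_minus: "K (- a) = - K a" by (simp add: K_def)
lemma K_diff: "K (a - b) = K a - K b" by (simp add: K_def)

lemma ordge_power: "ordge 1 X \<Longrightarrow> ordge a (X ^ a)"
proof (induction a)
  case (Suc a) then show ?case using ordge_mult[of 1 X a "X^a"] by simp
qed simp

lemma ordge_monomial: "ordge 1 X \<Longrightarrow> ordge 1 Y \<Longrightarrow> ordge (a + b) (X ^ a * Y ^ b)"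
  by (intro ordge_mult ordge_power)

definition mon :: "nat \<Rightarrow> nat \<Rightarrow> ser" where
  "mon a b = fps_const (fps_X ^ a) * fps_X ^ b"

lemma mono_nth[simp]: "cf (mon a b) i j = (if i = a \<and> j = b then 1 else 0)"
  by (simp add: mon_def)

lemma mono_mult: "mon a b * mon c d = mon (a + c) (b + d)"
  by (simp add: mon_def power_add algebra_simps flip: fps_const_mult)

definition D4 :: "(nat \<times> nat) set" where "D4 = {(a,b). a + b \<le> 4}"

lemma finite_D4[simp]: "finite D4"
proof -
  have "D4 \<subseteq> {..4} \<times> {..4}" by (auto simp: D4_def)
  then show ?thesis by (rule finite_subset) auto
qed

definition cong :: "ser \<Rightarrow> ser \<Rightarrow> bool" (infix "\<equiv>\<^sub>5" 50) where
  "P \<equiv>\<^sub>5 Q \<longleftrightarrow> ordge 5 (P - Q)"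

lemma cong_refl[simp]: "P \<equiv>\<^sub>5 P" by (simp add: cong_def)
lemma cong_sym: "P \<equiv>\<^sub>5 Q \<Longrightarrow> Q \<equiv>\<^sub>5 P"
  unfolding cong_def using ordge_uminus by fastforce
lemma cong_trans[trans]: "P \<equiv>\<^sub>5 Q \<Longrightarrow> Q \<equiv>\<^sub>5 R \<Longrightarrow> P \<equiv>\<^sub>5 R"
  unfolding cong_def using ordge_add by fastforce
lemma cong_add: "P \<equiv>\<^sub>5 P' \<Longrightarrow> Q \<equiv>\<^sub>5 Q' \<Longrightarrow> P + Q \<equiv>\<^sub>5 P' + Q'"
  unfolding cong_def using ordge_add by (fastforce simp: algebra_simps)
lemma cong_diff: "P \<equiv>\<^sub>5 P' \<Longrightarrow> Q \<equiv>\<^sub>5 Q' \<Longrightarrow> P - Q \<equiv>\<^sub>5 P' - Q'"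
  unfolding cong_def using ordge_diff by (fastforce simp: algebra_simps)
lemma cong_mult: "P \<equiv>\<^sub>5 P' \<Longrightarrow> Q \<equiv>\<^sub>5 Q' \<Longrightarrow> P * Q \<equiv>\<^sub>5 P' * Q'"
proof -
  assume a: "P \<equiv>\<^sub>5 P'" "Q \<equiv>\<^sub>5 Q'"
  have "P * Q - P' * Q' = (P - P') * Q + P' * (Q - Q')" by (simp add: algebra_simps)
  moreover have "ordge 5 ((P - P') * Q)" using ordge_mult[of 5 "P - P'" 0 Q] a by (simp add: cong_def)
  moreover have "ordge 5 (P' * (Q - Q'))" using ordge_mult[of 0 P' 5 "Q - Q'"] a by (simp add: cong_def)
  ultimately show ?thesis by (simp add: cong_def ordge_add)
qed
lemma cong_sum: "(\<And>x. x \<in> A \<Longrightarrow> f x \<equiv>\<^sub>5 g x) \<Longrightarrow> sum f A \<equiv>\<^sub>5 sum g A"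
  by (induction A rule: infinite_finite_induct) (auto intro: cong_add)
lemma cong_power: "P \<equiv>\<^sub>5 Q \<Longrightarrow> P ^ n \<equiv>\<^sub>5 Q ^ n"
  by (induction n) (auto intro: cong_mult)
lemma cong_ordge: "ordge 5 P \<Longrightarrow> P \<equiv>\<^sub>5 0" by (simp add: cong_def)

definition trunc :: "ser \<Rightarrow> ser" where
  "trunc P = (\<Sum>(a,b)\<in>D4. K (cf P a b) * mon a b)"

lemma trunc_nth: "cf (trunc P) i j = (if i + j \<le> 4 then cf P i j else 0)"
proof -
  have "cf (trunc P) i j = (\<Sum>x\<in>D4. (if x = (i,j) then cf P i j else 0))"
    unfolding trunc_def fps_sum_nth
    by (intro sum.cong refl) (auto simp: case_prod_beta)
  also have "\<dots> = (if i + j \<le> 4 then cf P i j else 0)"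
    by (simp only: sum.delta[OF finite_D4]) (simp add: D4_def)
  finally show ?thesis .
qed

lemma trunc_cong: "P \<equiv>\<^sub>5 trunc P"
  by (auto simp: cong_def ordge_def trunc_nth)

definition sb :: "ser \<Rightarrow> ser \<Rightarrow> ser \<Rightarrow> ser" where
  "sb X Y P = (\<Sum>(a,b)\<in>D4. K (cf P a b) * X ^ a * Y ^ b)"

lemma sb_cong: "P \<equiv>\<^sub>5 Q \<Longrightarrow> sb X Y P = sb X Y Q"
proof -
  assume "P \<equiv>\<^sub>5 Q"
  then have "\<And>a b. (a,b) \<in> D4 \<Longrightarrow> cf P a b = cf Q a b"
    by (auto simp: cong_def ordge_def D4_def)
  then show ?thesis unfolding sb_def by (intro sum.cong) auto
qed

lemma sb_add: "sb X Y (P + Q) = sb X Y P + sb X Y Q"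
  by (simp add: sb_def K_add algebra_simps sum.distrib case_prod_beta)
lemma sb_diff: "sb X Y (P - Q) = sb X Y P - sb X Y Q"
  by (simp add: sb_def K_diff algebra_simps sum_subtractf case_prod_beta)
lemma sb_K: "sb X Y (K r * P) = K r * sb X Y P"
  unfolding sb_def sum_distrib_left
  by (intro sum.cong refl) (simp only: case_prod_beta K_mult_nth K_mult, simp add: mult_ac)
lemma sb_0: "sb X Y 0 = 0" by (simp add: sb_def)
lemma sb_sum: "sb X Y (sum f A) = (\<Sum>x\<in>A. sb X Y (f x))"
  by (induction A rule: infinite_finite_induct) (auto simp: sb_add sb_0)

lemma sb_mono: "sb X Y (mon a b) = (if a + b \<le> 4 then X ^ a * Y ^ b else 0)"
proof -
  have "sb X Y (mon a b) = (\<Sum>x\<in>D4. (if x = (a,b) then X ^ a * Y ^ b else 0))"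
    unfolding sb_def by (intro sum.cong refl) (auto simp: case_prod_beta)
  then show ?thesis by (simp only: sum.delta[OF finite_D4]) (simp add: D4_def)
qed

lemma sb_1: "sb X Y 1 = 1"
proof -
  have "sb X Y 1 = sb X Y (mon 0 0)" by (simp add: mon_def)
  then show ?thesis by (simp add: sb_mono)
qed

lemma sb_trunc: "sb X Y (trunc P) = (\<Sum>(a,b)\<in>D4. K (cf P a b) * X ^ a * Y ^ b)"
  unfolding trunc_def sb_sum
  by (intro sum.cong refl) (auto simp: sb_K sb_mono D4_def mult.assoc)

lemma sb_mult:
  assumes X: "ordge 1 X" and Y: "ordge 1 Y"
  shows "sb X Y (P * Q) \<equiv>\<^sub>5 sb X Y P * sb X Y Q"
proof -
  have e1: "sb X Y (P * Q) = sb X Y (trunc P * trunc Q)"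
    by (rule sb_cong) (intro cong_mult trunc_cong)
  have e2: "sb X Y P = sb X Y (trunc P)" "sb X Y Q = sb X Y (trunc Q)"
    by (rule sb_cong, rule trunc_cong)+
  have "trunc P * trunc Q = (\<Sum>x\<in>D4. \<Sum>y\<in>D4.
          K (cf P (fst x) (snd x)) * K (cf Q (fst y) (snd y)) * mon (fst x + fst y) (snd x + snd y))"
    unfolding trunc_def sum_product
    by (intro sum.cong refl) (auto simp: case_prod_beta algebra_simps simp flip: mono_mult)
  then have l: "sb X Y (trunc P * trunc Q) = (\<Sum>x\<in>D4. \<Sum>y\<in>D4.
          K (cf P (fst x) (snd x)) * K (cf Q (fst y) (snd y)) * sb X Y (mon (fst x + fst y) (snd x + snd y)))"
    by (simp add: sb_sum mult.assoc sb_K)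
  have r: "sb X Y (trunc P) * sb X Y (trunc Q) = (\<Sum>x\<in>D4. \<Sum>y\<in>D4.
          K (cf P (fst x) (snd x)) * K (cf Q (fst y) (snd y)) *
            ((X ^ fst x * Y ^ snd x) * (X ^ fst y * Y ^ snd y)))"
    unfolding sb_trunc sum_product
    by (intro sum.cong refl) (auto simp: case_prod_beta algebra_simps)
  have "sb X Y (trunc P * trunc Q) \<equiv>\<^sub>5 sb X Y (trunc P) * sb X Y (trunc Q)"
    unfolding l r
  proof (intro cong_sum cong_mult cong_refl)
    fix x y
    show "sb X Y (mon (fst x + fst y) (snd x + snd y)) \<equiv>\<^sub>5 X ^ fst x * Y ^ snd x * (X ^ fst y * Y ^ snd y)"
    proof (cases "fst x + fst y + (snd x + snd y) \<le> 4")
      case True then show ?thesis by (simp add: sb_mono power_add algebra_simps)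
    next
      case False
      have "ordge (fst x + snd x + (fst y + snd y)) (X ^ fst x * Y ^ snd x * (X ^ fst y * Y ^ snd y))"
        by (intro ordge_mult ordge_monomial X Y)
      then have "ordge 5 (X ^ fst x * Y ^ snd x * (X ^ fst y * Y ^ snd y))"
        by (rule ordge_mono) (use False in auto)
      then show ?thesis using False by (simp add: sb_mono cong_def ordge_uminus)
    qed
  qed
  then show ?thesis using e1 e2 by simp
qed

lemma sb_power:
  assumes "ordge 1 X" "ordge 1 Y"
  shows "sb X Y (P ^ n) \<equiv>\<^sub>5 sb X Y P ^ n"
proof (induction n)
  case 0 then show ?case by (simp add: sb_1)
next
  case (Suc n)
  have "sb X Y (P ^ Suc n) \<equiv>\<^sub>5 sb X Y P * sb X Y (P ^ n)"
    using sb_mult[OF assms] by simp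
  also have "sb X Y P * sb X Y (P ^ n) \<equiv>\<^sub>5 sb X Y P * sb X Y P ^ n"
    using Suc by (intro cong_mult cong_refl)
  finally show ?case by simp
qed


definition JC :: "jet \<Rightarrow> nat \<Rightarrow> ser" where "JC f c = emb (coef f c)"

lemma cf_JC[simp]: "cf (JC f c) i j = coef f c i j" by (simp add: JC_def)

lemma jidx_set_iff[simp]: "(c,i,j) \<in> jidx_set \<longleftrightarrow> c < 2 \<and> 1 \<le> i + j \<and> i + j \<le> 4"
  by (simp add: jidx_set_def)

lemma coef_mkjet: "coef (mkjet P) c i j = (if (c,i,j) \<in> jidx_set then P c i j else 0)"
  by (simp add: coef_def mkjet_def Abs_jidx_inverse)

lemma coef_out: "(c,i,j) \<notin> jidx_set \<Longrightarrow> coef f c i j = 0"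
  by (simp add: coef_def del: jidx_set_iff)

lemma coef_00[simp]: "coef f c 0 0 = 0" by (simp add: coef_def)

lemma jet_eqI: "(\<And>c i j. (c,i,j) \<in> jidx_set \<Longrightarrow> coef x c i j = coef y c i j) \<Longrightarrow> x = y"
proof -
  assume h: "\<And>c i j. (c,i,j) \<in> jidx_set \<Longrightarrow> coef x c i j = coef y c i j"
  show "x = y"
  proof (rule vec_eq_iff[THEN iffD2], rule allI)
    fix k
    obtain c i j where r: "Rep_jidx k = (c,i,j)" by (cases "Rep_jidx k") auto
    then have m: "(c,i,j) \<in> jidx_set" using Rep_jidx[of k] by simp
    have "Abs_jidx (c,i,j) = k" using r Rep_jidx_inverse[of k] by simp
    then show "x $ k = y $ k" using h[OF m] m by (simp add: coef_def)
  qed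
qed

lemma ordge1_JC[simp]: "ordge 1 (JC f c)" by (simp add: ordge_def)
lemma ordge1_JC'[simp]: "ordge (Suc 0) (JC f c)" by (simp add: ordge_def)

lemma coef_add[simp]: "coef (x + y) c i j = coef x c i j + coef y c i j" by (simp add: coef_def)
lemma coef_diff[simp]: "coef (x - y) c i j = coef x c i j - coef y c i j" by (simp add: coef_def)
lemma coef_zero[simp]: "coef 0 c i j = 0" by (simp add: coef_def)

lemma JC_add: "JC (x + y) c = JC x c + JC y c" by (rule ser_eqI) simp
lemma JC_diff: "JC (x - y) c = JC x c - JC y c" by (rule ser_eqI) simp
lemma JC_zero: "JC 0 c = 0" by (rule ser_eqI) simp

lemma jet_eq_cong:
  assumes "\<And>c. c < 2 \<Longrightarrow> JC x c \<equiv>\<^sub>5 JC y c" shows "x = y"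
proof (rule jet_eqI)
  fix c i j assume m: "(c,i,j) \<in> jidx_set"
  then have "ordge 5 (JC x c - JC y c)" using assms by (simp add: cong_def)
  then have "cf (JC x c - JC y c) i j = 0" using m by (simp add: ordge_def)
  then show "coef x c i j = coef y c i j" by simp
qed

lemma jet_eq_JC: "JC x 0 = JC y 0 \<Longrightarrow> JC x 1 = JC y 1 \<Longrightarrow> x = y"
  by (rule jet_eq_cong) (auto simp: less_2_cases_iff)

lemma sb_nth: "cf (sb X Y P) i j = (\<Sum>(a,b)\<in>D4. cf P a b * cf (X ^ a * Y ^ b) i j)"
  unfolding sb_def fps_sum_nth by (intro sum.cong refl) (simp add: case_prod_beta mult.assoc)

lemma cf_monomial_low: "ordge 1 X \<Longrightarrow> ordge 1 Y \<Longrightarrow> i + j < a + b \<Longrightarrow> cf (X ^ a * Y ^ b) i j = 0"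
  using ordge_monomial[of X Y a b] by (simp add: ordge_def)

lemma jmonos_D4: "D4 = insert (0,0) jmonos" "(0,0) \<notin> jmonos"
  by (auto simp: D4_def jmonos_def)

lemma finite_jmonos: "finite jmonos"
  using finite_D4 jmonos_D4 by (metis finite_insert)

lemma ordge1_sb: "ordge 1 P \<Longrightarrow> ordge 1 X \<Longrightarrow> ordge 1 Y \<Longrightarrow> ordge 1 (sb X Y P)"
  unfolding ordge_def[of 1 "sb X Y P"] sb_nth
proof (intro allI impI sum.neutral ballI)
  fix i j :: nat and x :: "nat \<times> nat" assume P: "ordge 1 P" and X: "ordge 1 X" and Y: "ordge 1 Y" and ij: "i + j < 1"
  obtain a b where x: "x = (a,b)" by (cases x)
  show "(case x of (a, b) \<Rightarrow> cf P a b * cf (X ^ a * Y ^ b) i j) = 0"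
  proof (cases "a + b = 0")
    case True then show ?thesis using P x by (simp add: ordge_def)
  next
    case False then show ?thesis using x ij cf_monomial_low[OF X Y, of i j a b] by simp
  qed
qed

lemma JC_jcomp: "c < 2 \<Longrightarrow> JC (jcomp \<phi> f) c \<equiv>\<^sub>5 sb (JC f 0) (JC f 1) (JC \<phi> c)"
  unfolding cong_def ordge_def
proof (intro allI impI)
  fix i j :: nat assume c: "c < 2" and ij: "i + j < 5"
  have e: "\<And>a b. cf (JC f 0 ^ a * JC f 1 ^ b) i j = pmul (ppow (coef f 0) a) (ppow (coef f 1) b) i j"
    by (simp add: JC_def flip: emb_ppow emb_pmul)
  show "cf (JC (jcomp \<phi> f) c - sb (JC f 0) (JC f 1) (JC \<phi> c)) i j = 0"
  proof (cases "i + j = 0")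
    case True
    then have "cf (sb (JC f 0) (JC f 1) (JC \<phi> c)) i j = 0"
      using ordge1_sb[of "JC \<phi> c" "JC f 0" "JC f 1"] by (simp add: ordge_def)
    then show ?thesis using True by simp
  next
    case False
    then have m: "(c,i,j) \<in> jidx_set" using c ij by auto
    have "cf (sb (JC f 0) (JC f 1) (JC \<phi> c)) i j =
       (\<Sum>(a,b)\<in>jmonos. coef \<phi> c a b * pmul (ppow (coef f 0) a) (ppow (coef f 1) b) i j)"
      unfolding sb_nth jmonos_D4(1) using jmonos_D4(2) finite_jmonos
      by (simp add: e[simplified] case_prod_beta)
    then show ?thesis using m by (simp add: jcomp_def coef_mkjet)
  qed
qed

lemma sb_cong_XY:
  "X \<equiv>\<^sub>5 X' \<Longrightarrow> Y \<equiv>\<^sub>5 Y' \<Longrightarrow> sb X Y P \<equiv>\<^sub>5 sb X' Y' P"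
  unfolding sb_def by (intro cong_sum) (auto simp: case_prod_beta intro!: cong_mult cong_power)

lemma sb_sb:
  assumes "ordge 1 X" "ordge 1 Y"
  shows "sb X Y (sb U V P) \<equiv>\<^sub>5 sb (sb X Y U) (sb X Y V) P"
proof -
  have "sb X Y (sb U V P) = (\<Sum>(a,b)\<in>D4. K (cf P a b) * sb X Y (U ^ a * V ^ b))"
    unfolding sb_def[of U V P] sb_sum by (intro sum.cong refl) (simp add: case_prod_beta mult.assoc sb_K)
  also have "\<dots> \<equiv>\<^sub>5 (\<Sum>(a,b)\<in>D4. K (cf P a b) * (sb X Y U ^ a * sb X Y V ^ b))"
  proof (intro cong_sum)
    fix x assume "x \<in> D4"
    obtain a b where x: "x = (a,b)" by (cases x)
    have "sb X Y (U ^ a * V ^ b) \<equiv>\<^sub>5 sb X Y (U ^ a) * sb X Y (V ^ b)" by (rule sb_mult[OF assms])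
    also have "\<dots> \<equiv>\<^sub>5 sb X Y U ^ a * sb X Y V ^ b" by (intro cong_mult sb_power assms)
    finally show "(case x of (a, b) \<Rightarrow> K (cf P a b) * sb X Y (U ^ a * V ^ b)) \<equiv>\<^sub>5
          (case x of (a, b) \<Rightarrow> K (cf P a b) * (sb X Y U ^ a * sb X Y V ^ b))"
      unfolding x by (simp add: cong_mult)
  qed
  also have "\<dots> = sb (sb X Y U) (sb X Y V) P"
    unfolding sb_def by (intro sum.cong refl) (simp add: case_prod_beta mult.assoc)
  finally show ?thesis .
qed

theorem jcomp_assoc: "jcomp a (jcomp f \<psi>) = jcomp (jcomp a f) \<psi>"
proof (rule jet_eq_cong)
  fix c :: nat assume c: "c < 2"
  let ?X = "JC \<psi> 0" and ?Y = "JC \<psi> 1"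
  have "JC (jcomp a (jcomp f \<psi>)) c \<equiv>\<^sub>5 sb (JC (jcomp f \<psi>) 0) (JC (jcomp f \<psi>) 1) (JC a c)"
    by (rule JC_jcomp[OF c])
  also have "\<dots> \<equiv>\<^sub>5 sb (sb ?X ?Y (JC f 0)) (sb ?X ?Y (JC f 1)) (JC a c)"
    by (intro sb_cong_XY JC_jcomp) auto
  also have "\<dots> \<equiv>\<^sub>5 sb ?X ?Y (sb (JC f 0) (JC f 1) (JC a c))"
    by (rule cong_sym, rule sb_sb) auto
  also have "\<dots> = sb ?X ?Y (JC (jcomp a f) c)"
    by (rule sb_cong, rule cong_sym, rule JC_jcomp[OF c])
  also have "\<dots> \<equiv>\<^sub>5 JC (jcomp (jcomp a f) \<psi>) c"
    by (rule cong_sym, rule JC_jcomp[OF c])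
  finally show "JC (jcomp a (jcomp f \<psi>)) c \<equiv>\<^sub>5 JC (jcomp (jcomp a f) \<psi>) c" .
qed


definition jpair :: "jet \<Rightarrow> jet \<Rightarrow> jet" where
  "jpair a b = mkjet (\<lambda>c i j. if c = 0 then coef a 0 i j else coef b 1 i j)"

definition lj :: "real \<Rightarrow> real \<Rightarrow> real \<Rightarrow> real \<Rightarrow> jet" where
  "lj m00 m01 m10 m11 = mkjet (\<lambda>c i j.
     if (i,j) = (1,0) then (if c = 0 then m00 else m10)
     else if (i,j) = (0,1) then (if c = 0 then m01 else m11) else 0)"

definition I0 :: jet where "I0 = lj 1 0 0 1"

lemma coef_jpair: "coef (jpair a b) c i j = (if c = 0 then coef a 0 i j else if c = 1 then coef b 1 i j else 0)"
proof (cases "(c,i,j) \<in> jidx_set")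
  case True then show ?thesis by (auto simp: jpair_def coef_mkjet)
next
  case False
  then have "(c = 0 \<longrightarrow> coef a 0 i j = 0) \<and> (c = 1 \<longrightarrow> coef b 1 i j = 0)"
    by (auto intro: coef_out)
  then show ?thesis using False by (auto simp: jpair_def coef_mkjet simp del: jidx_set_iff)
qed

lemma JC_jpair[simp]: "JC (jpair a b) 0 = JC a 0" "JC (jpair a b) (Suc 0) = JC b (Suc 0)"
  by (rule ser_eqI, simp add: coef_jpair)+

lemma coef_lj: "coef (lj m00 m01 m10 m11) c i j =
   (if c < 2 then (if (i,j) = (1,0) then (if c = 0 then m00 else m10)
     else if (i,j) = (0,1) then (if c = 0 then m01 else m11) else 0) else 0)"
  by (auto simp: lj_def coef_mkjet)

lemma JC_lj: "JC (lj m00 m01 m10 m11) 0 = K m00 * mon 1 0 + K m01 * mon 0 1"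
  "JC (lj m00 m01 m10 m11) (Suc 0) = K m10 * mon 1 0 + K m11 * mon 0 1"
  by (rule ser_eqI, auto simp: coef_lj)+

lemma JC_lj1: "JC (lj m00 m01 m10 m11) 1 = K m10 * mon 1 0 + K m11 * mon 0 1"
  using JC_lj(2) by simp

lemma sb_lin: "sb X Y (K p * mon 1 0 + K q * mon 0 1) = K p * X + K q * Y"
  by (simp add: sb_add sb_K sb_mono)

lemma sb_id: "sb (mon 1 0) (mon 0 1) P = trunc P"
proof -
  have "\<And>a b. mon 1 0 ^ a * mon 0 1 ^ b = mon a b"
  proof -
    fix a b :: nat
    have p1: "\<And>n. mon 1 0 ^ n = mon n 0"
    proof -
      fix n show "mon 1 0 ^ n = mon n 0" by (induction n) (simp_all add: mon_def power_add mult_ac)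
    qed
    have p2: "\<And>n. mon 0 1 ^ n = mon 0 n"
    proof -
      fix n show "mon 0 1 ^ n = mon 0 n" by (induction n) (simp_all add: mon_def)
    qed
    note p = p1 p2
    show "mon 1 0 ^ a * mon 0 1 ^ b = mon a b" by (simp add: p[simplified] mono_mult)
  qed
  then show ?thesis unfolding sb_def trunc_def by (simp add: mult.assoc)
qed


lemma jcomp_I_left: "jcomp I0 f = f"
proof (rule jet_eq_cong)
  fix c :: nat assume c: "c < 2"
  have "JC (jcomp I0 f) c \<equiv>\<^sub>5 sb (JC f 0) (JC f 1) (JC I0 c)" by (rule JC_jcomp[OF c])
  also have "sb (JC f 0) (JC f 1) (JC I0 c) = JC f c"
  proof -
    have "c = 0 \<or> c = 1" using c by auto
    then show ?thesis by (elim disjE) (simp_all add: I0_def JC_lj sb_lin sb_mono)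
  qed
  finally show "JC (jcomp I0 f) c \<equiv>\<^sub>5 JC f c" .
qed

lemma jcomp_I_right: "jcomp f I0 = f"
proof (rule jet_eq_cong)
  fix c :: nat assume c: "c < 2"
  have "JC (jcomp f I0) c \<equiv>\<^sub>5 sb (JC I0 0) (JC I0 1) (JC f c)" by (rule JC_jcomp[OF c])
  also have "sb (JC I0 0) (JC I0 1) (JC f c) = trunc (JC f c)"
    by (simp add: I0_def JC_lj sb_id[symmetric])
  also have "trunc (JC f c) \<equiv>\<^sub>5 JC f c" by (rule cong_sym, rule trunc_cong)
  finally show "JC (jcomp f I0) c \<equiv>\<^sub>5 JC f c" .
qed

lemma jcomp_add_left: "jcomp (a + b) f = jcomp a f + jcomp b f"
proof (rule jet_eq_cong)
  fix c :: nat assume c: "c < 2"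
  have "JC (jcomp (a + b) f) c \<equiv>\<^sub>5 sb (JC f 0) (JC f 1) (JC a c) + sb (JC f 0) (JC f 1) (JC b c)"
    using JC_jcomp[OF c, of "a + b" f] by (simp add: JC_add sb_add)
  also have "\<dots> \<equiv>\<^sub>5 JC (jcomp a f) c + JC (jcomp b f) c"
    by (rule cong_add[OF cong_sym[OF JC_jcomp[OF c]] cong_sym[OF JC_jcomp[OF c]]])
  finally show "JC (jcomp (a + b) f) c \<equiv>\<^sub>5 JC (jcomp a f + jcomp b f) c" by (simp add: JC_add)
qed

lemma jcomp_diff_left: "jcomp (a - b) f = jcomp a f - jcomp b f"
proof (rule jet_eq_cong)
  fix c :: nat assume c: "c < 2"
  have "JC (jcomp (a - b) f) c \<equiv>\<^sub>5 sb (JC f 0) (JC f 1) (JC a c) - sb (JC f 0) (JC f 1) (JC b c)"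
    using JC_jcomp[OF c, of "a - b" f] by (simp add: JC_diff sb_diff)
  also have "\<dots> \<equiv>\<^sub>5 JC (jcomp a f) c - JC (jcomp b f) c"
    by (rule cong_diff[OF cong_sym[OF JC_jcomp[OF c]] cong_sym[OF JC_jcomp[OF c]]])
  finally show "JC (jcomp (a - b) f) c \<equiv>\<^sub>5 JC (jcomp a f - jcomp b f) c" by (simp add: JC_diff)
qed

lemma jcomp_jpair: "jcomp (jpair a b) f = jpair (jcomp a f) (jcomp b f)"
proof (rule jet_eq_cong)
  fix c :: nat assume c: "c < 2"
  show "JC (jcomp (jpair a b) f) c \<equiv>\<^sub>5 JC (jpair (jcomp a f) (jcomp b f)) c"
  proof (cases "c = 0")
    case True
    have "JC (jcomp (jpair a b) f) 0 \<equiv>\<^sub>5 sb (JC f 0) (JC f 1) (JC a 0)"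
      using JC_jcomp[of 0 "jpair a b" f] by (simp add: JC_jpair)
    also have "\<dots> \<equiv>\<^sub>5 JC (jcomp a f) 0" by (rule cong_sym, rule JC_jcomp) simp
    finally show ?thesis using True by (simp add: JC_jpair)
  next
    case False
    then have c1: "c = 1" using c by simp
    have "JC (jcomp (jpair a b) f) 1 \<equiv>\<^sub>5 sb (JC f 0) (JC f 1) (JC b 1)"
      using JC_jcomp[of 1 "jpair a b" f] by (simp add: JC_jpair)
    also have "\<dots> \<equiv>\<^sub>5 JC (jcomp b f) 1" by (rule cong_sym, rule JC_jcomp) simp
    finally show ?thesis using c1 by (simp add: JC_jpair)
  qed
qed

lemma jpair_same: "jpair a a = a"
  by (rule jet_eq_JC) (simp_all add: JC_jpair)
lemma jpair_left: "jpair (jpair a b) c = jpair a c"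
  by (rule jet_eq_JC) (simp_all add: JC_jpair)
lemma jpair_right: "jpair a (jpair b c) = jpair a c"
  by (rule jet_eq_JC) (simp_all add: JC_jpair)
lemma jpair_eq_first: "JC a 0 = JC b 0 \<Longrightarrow> jpair a c = jpair b c"
  by (rule jet_eq_JC) (simp_all add: JC_jpair)

lemma jcomp_lj_lj: "jcomp (lj a b c d) (lj p q r s) =
   lj (a*p + b*r) (a*q + b * s) (c*p + d*r) (c*q + d * s)"
proof (rule jet_eq_cong)
  fix k :: nat assume k: "k < 2"
  have "JC (jcomp (lj a b c d) (lj p q r s)) k \<equiv>\<^sub>5
     sb (JC (lj p q r s) 0) (JC (lj p q r s) 1) (JC (lj a b c d) k)" by (rule JC_jcomp[OF k])
  also have "\<dots> = JC (lj (a*p + b*r) (a*q + b * s) (c*p + d*r) (c*q + d * s)) k"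
  proof -
    have "k = 0 \<or> k = 1" using k by auto
    then show ?thesis by (elim disjE; simp only: JC_lj JC_lj1 sb_lin K_add K_mult; simp only: ring_distribs ac_simps)
  qed
  finally show "JC (jcomp (lj a b c d) (lj p q r s)) k \<equiv>\<^sub>5 JC (lj (a*p + b*r) (a*q + b * s) (c*p + d*r) (c*q + d * s)) k" .
qed

lemma jcomp_zero_right: "jcomp a 0 = 0"
proof (rule jet_eq_cong)
  fix c :: nat assume c: "c < 2"
  have "JC (jcomp a 0) c \<equiv>\<^sub>5 sb 0 0 (JC a c)" using JC_jcomp[OF c, of a 0] by (simp add: JC_zero)
  also have "sb 0 0 (JC a c) = 0"
  proof (rule ser_eqI)
    fix i j
    have "cf (sb 0 0 (JC a c)) i j = 0"
      unfolding sb_nth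
    proof (intro sum.neutral ballI)
      fix x :: "nat \<times> nat"
      obtain p q where x: "x = (p,q)" by (cases x)
      show "(case x of (p, q) \<Rightarrow> cf (JC a c) p q * cf (0 ^ p * 0 ^ q) i j) = 0"
        unfolding x by (cases p; cases q) auto
    qed
    then show "cf (sb 0 0 (JC a c)) i j = cf 0 i j" by simp
  qed
  finally show "JC (jcomp a 0) c \<equiv>\<^sub>5 JC 0 c" by (simp add: JC_zero)
qed


lemma cong_nth: "P \<equiv>\<^sub>5 Q \<Longrightarrow> i + j < 5 \<Longrightarrow> cf P i j = cf Q i j"
  by (auto simp: cong_def ordge_def)

lemma sb_low:
  assumes P: "ordge 1 P" and X: "ordge 1 X" and Y: "ordge 1 Y" and ij: "i + j \<le> 1"
  shows "cf (sb X Y P) i j = cf P 1 0 * cf X i j + cf P 0 1 * cf Y i j"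
proof -
  let ?S = "{(0,0),(1,0),(0,1)} :: (nat \<times> nat) set"
  have "cf (sb X Y P) i j = (\<Sum>(a,b)\<in>D4. cf P a b * cf (X ^ a * Y ^ b) i j)" by (rule sb_nth)
  also have "\<dots> = (\<Sum>(a,b)\<in>?S. cf P a b * cf (X ^ a * Y ^ b) i j)"
  proof (rule sum.mono_neutral_right)
    show "?S \<subseteq> D4" by (auto simp: D4_def)
    show "\<forall>x\<in>D4 - ?S. (case x of (a, b) \<Rightarrow> cf P a b * cf (X ^ a * Y ^ b) i j) = 0"
    proof
      fix x assume x: "x \<in> D4 - ?S"
      obtain a b where ab: "x = (a,b)" by (cases x)
      then have "i + j < a + b" using x ij by auto
      then show "(case x of (a, b) \<Rightarrow> cf P a b * cf (X ^ a * Y ^ b) i j) = 0"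
        using cf_monomial_low[OF X Y] ab by simp
    qed
  qed simp
  also have "\<dots> = cf P 1 0 * cf X i j + cf P 0 1 * cf Y i j"
    using P by (simp add: ordge_def)
  finally show ?thesis .
qed

lemma coef_jcomp_lin:
  assumes c: "c < 2" and ij: "i + j = 1"
  shows "coef (jcomp a b) c i j = coef a c 1 0 * coef b 0 i j + coef a c 0 1 * coef b 1 i j"
proof -
  have "coef (jcomp a b) c i j = cf (sb (JC b 0) (JC b 1) (JC a c)) i j"
    using cong_nth[OF JC_jcomp[OF c, of a b], of i j] ij by simp
  also have "\<dots> = coef a c 1 0 * coef b 0 i j + coef a c 0 1 * coef b 1 i j"
    by (subst sb_low) (use ij in auto)
  finally show ?thesis .
qed

lemma coef_jcomp_lin' [simp]:
  "coef (jcomp a b) 0 (Suc 0) 0 = coef a 0 (Suc 0) 0 * coef b 0 (Suc 0) 0 + coef a 0 0 (Suc 0) * coef b (Suc 0) (Suc 0) 0"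
  "coef (jcomp a b) 0 0 (Suc 0) = coef a 0 (Suc 0) 0 * coef b 0 0 (Suc 0) + coef a 0 0 (Suc 0) * coef b (Suc 0) 0 (Suc 0)"
  "coef (jcomp a b) (Suc 0) (Suc 0) 0 = coef a (Suc 0) (Suc 0) 0 * coef b 0 (Suc 0) 0 + coef a (Suc 0) 0 (Suc 0) * coef b (Suc 0) (Suc 0) 0"
  "coef (jcomp a b) (Suc 0) 0 (Suc 0) = coef a (Suc 0) (Suc 0) 0 * coef b 0 0 (Suc 0) + coef a (Suc 0) 0 (Suc 0) * coef b (Suc 0) 0 (Suc 0)"
  by (simp_all add: coef_jcomp_lin)

definition Dj :: "jet \<Rightarrow> real" where
  "Dj f = coef f 0 1 0 * coef f 1 0 1 - coef f 0 0 1 * coef f 1 1 0"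

lemma Dj_jcomp: "Dj (jcomp a b) = Dj a * Dj b"
  by (simp add: Dj_def algebra_simps)

definition agree :: "nat \<Rightarrow> jet \<Rightarrow> jet \<Rightarrow> bool" where
  "agree d x y \<longleftrightarrow> (\<forall>c<2. ordge (Suc d) (JC x c - JC y c))"

lemma agree_refl: "agree d x x" by (simp add: agree_def)
lemma agree_sym: "agree d x y \<Longrightarrow> agree d y x"
  unfolding agree_def using ordge_uminus by fastforce
lemma agree_trans: "agree d x y \<Longrightarrow> agree d y z \<Longrightarrow> agree d x z"
  unfolding agree_def using ordge_add by fastforce
lemma agree_mono: "agree d x y \<Longrightarrow> e \<le> d \<Longrightarrow> agree e x y"
  unfolding agree_def using ordge_mono by (meson Suc_le_mono)
lemma agree_0: "agree 0 x y"
  unfolding agree_def by (auto intro!: ordge_diff)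
lemma agree_eq: "agree 4 x y \<Longrightarrow> x = y"
  unfolding agree_def by (intro jet_eq_cong) (simp add: cong_def numeral_eq_Suc)
lemma agree_diff: "agree d x y \<Longrightarrow> agree d x' y' \<Longrightarrow> agree d (x - x') (y - y')"
  unfolding agree_def JC_diff using ordge_diff by (fastforce simp: algebra_simps)
lemma agree_coef: "agree 1 x y \<Longrightarrow> i + j \<le> 1 \<Longrightarrow> coef x c i j = coef y c i j"
proof -
  assume a: "agree 1 x y" and ij: "i + j \<le> 1"
  show ?thesis
  proof (cases "c < 2")
    case True
    then have "ordge 2 (JC x c - JC y c)" using a by (simp add: agree_def numeral_2_eq_2)
    then show ?thesis using ij by (simp add: ordge_def)
  next
    case False then show ?thesis by (simp add: coef_out)
  qed
qed

lemma pow_diff: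
  assumes X: "ordge 1 X" "ordge 1 X'" and d: "ordge (Suc d) (X - X')"
  shows "ordge (d + a) (X ^ a - X' ^ a)"
proof (induction a)
  case 0 then show ?case by simp
next
  case (Suc a)
  have e: "X ^ Suc a - X' ^ Suc a = (X - X') * X ^ a + X' * (X ^ a - X' ^ a)"
    by (simp add: algebra_simps)
  have "ordge (Suc d + a) ((X - X') * X ^ a)" by (intro ordge_mult d ordge_power X)
  moreover have "ordge (1 + (d + a)) (X' * (X ^ a - X' ^ a))" by (intro ordge_mult X Suc)
  ultimately show ?case unfolding e by (intro ordge_add) simp_all
qed

lemma monomial_diff:
  assumes X: "ordge 1 X" "ordge 1 X'" "ordge (Suc d) (X - X')"
    and Y: "ordge 1 Y" "ordge 1 Y'" "ordge (Suc d) (Y - Y')"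
  shows "ordge (d + (a + b)) (X ^ a * Y ^ b - X' ^ a * Y' ^ b)"
proof -
  have e: "X ^ a * Y ^ b - X' ^ a * Y' ^ b = (X ^ a - X' ^ a) * Y ^ b + X' ^ a * (Y ^ b - Y' ^ b)"
    by (simp add: algebra_simps)
  have "ordge (d + a + b) ((X ^ a - X' ^ a) * Y ^ b)"
    by (intro ordge_mult pow_diff X ordge_power Y)
  moreover have "ordge (a + (d + b)) (X' ^ a * (Y ^ b - Y' ^ b))"
    by (intro ordge_mult pow_diff Y ordge_power X)
  ultimately show ?thesis unfolding e by (intro ordge_add) (simp_all add: ac_simps)
qed

lemma sb_diff_XY: "sb X Y P - sb X' Y' P = (\<Sum>(a,b)\<in>D4. K (cf P a b) * (X ^ a * Y ^ b - X' ^ a * Y' ^ b))"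
  unfolding sb_def sum_subtractf[symmetric]
  by (intro sum.cong refl) (simp add: case_prod_beta algebra_simps)

lemma agree_comp:
  assumes N: "\<And>c. c < 2 \<Longrightarrow> ordge m (JC N c)" and m: "1 \<le> m"
    and xy: "agree d x y" and dm: "d + m \<le> 5"
  shows "agree (d + m - 1) (jcomp N x) (jcomp N y)"
  unfolding agree_def
proof (intro allI impI)
  fix c :: nat assume c: "c < 2"
  let ?sx = "sb (JC x 0) (JC x 1) (JC N c)" and ?sy = "sb (JC y 0) (JC y 1) (JC N c)"
  have e: "JC (jcomp N x) c - JC (jcomp N y) c =
     (JC (jcomp N x) c - ?sx) + (?sx - ?sy) + (?sy - JC (jcomp N y) c)" by simp
  have o1: "ordge (Suc (d + m - 1)) (JC (jcomp N x) c - ?sx)"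
    using JC_jcomp[OF c, of N x] dm by (auto simp: cong_def intro: ordge_mono)
  have o3: "ordge (Suc (d + m - 1)) (?sy - JC (jcomp N y) c)"
    using cong_sym[OF JC_jcomp[OF c, of N y]] dm by (auto simp: cong_def intro: ordge_mono)
  have x0: "ordge (Suc d) (JC x 0 - JC y 0)" and x1: "ordge (Suc d) (JC x 1 - JC y 1)"
    using xy by (auto simp: agree_def)
  have o2: "ordge (Suc (d + m - 1)) (?sx - ?sy)"
    unfolding sb_diff_XY
  proof (intro ordge_sum)
    fix p assume "p \<in> D4"
    obtain a b where p: "p = (a,b)" by (cases p)
    show "ordge (Suc (d + m - 1)) (case p of (a, b) \<Rightarrow>
        K (cf (JC N c) a b) * (JC x 0 ^ a * JC x 1 ^ b - JC y 0 ^ a * JC y 1 ^ b))"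
    proof (cases "a + b < m")
      case True
      then have "cf (JC N c) a b = 0" using N[OF c] by (simp add: ordge_def)
      then show ?thesis using p by simp
    next
      case False
      have "ordge (d + (a + b)) (JC x 0 ^ a * JC x 1 ^ b - JC y 0 ^ a * JC y 1 ^ b)"
        by (rule monomial_diff) (use x0 x1 in auto)
      then show ?thesis using p False m by (auto intro: ordge_K ordge_mono)
    qed
  qed
  show "ordge (Suc (d + m - 1)) (JC (jcomp N x) c - JC (jcomp N y) c)"
    unfolding e by (intro ordge_add o1 o2 o3)
qed

definition linj :: "jet \<Rightarrow> jet" where
  "linj a = lj (coef a 0 1 0) (coef a 0 0 1) (coef a 1 1 0) (coef a 1 0 1)"
definition linv :: "jet \<Rightarrow> jet" where
  "linv a = lj (coef a 1 0 1 / Dj a) (- coef a 0 0 1 / Dj a) (- coef a 1 1 0 / Dj a) (coef a 0 1 0 / Dj a)"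
definition Phi :: "jet \<Rightarrow> jet \<Rightarrow> jet" where
  "Phi a x = jcomp (linv a) (I0 - jcomp (a - linj a) x)"
definition jinv :: "jet \<Rightarrow> jet" where
  "jinv a = (Phi a ^^ 3) (linv a)"

lemma ordge2_N: "c < 2 \<Longrightarrow> ordge 2 (JC (a - linj a) c)"
  unfolding ordge_def
proof (intro allI impI)
  fix i j :: nat assume c: "c < 2" and ij: "i + j < 2"
  then have "(i = 0 \<and> j = 0) \<or> (i = 1 \<and> j = 0) \<or> (i = 0 \<and> j = 1)" by auto
  then show "cf (JC (a - linj a) c) i j = 0"
    using c by (auto simp: linj_def coef_lj less_2_cases_iff)
qed

lemma ordge1_all: "c < 2 \<Longrightarrow> ordge 1 (JC a c)" by simp

lemma jcomp_linj_linv: "Dj a \<noteq> 0 \<Longrightarrow> jcomp (linj a) (linv a) = I0"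
proof -
  assume D0: "Dj a \<noteq> 0"
  define p q r s where "p = coef a 0 1 0" "q = coef a 0 0 1" "r = coef a 1 1 0" "s = coef a 1 0 1"
  define D where "D = p * s - q * r"
  have D: "D \<noteq> 0" using D0 by (simp add: D_def Dj_def p_q_r_s_def)
  have e: "Dj a = D" by (simp add: D_def Dj_def p_q_r_s_def)
  have "jcomp (linj a) (linv a) = lj (p*(s/D) + q*(-q/D)*0 + q*(-r/D)) (p*(-q/D) + q*(p/D)) (r*(s/D) + s*(-r/D)) (r*(-q/D) + s*(p/D))"
    unfolding linj_def linv_def jcomp_lj_lj e p_q_r_s_def[symmetric] by (simp add: algebra_simps)
  also have "\<dots> = lj 1 0 0 1"
  proof -
    have "p*(s/D) + q*(-q/D)*0 + q*(-r/D) = 1" using D by (simp add: field_simps) (simp add: D_def)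
    moreover have "p*(-q/D) + q*(p/D) = 0" using D by (simp add: field_simps)
    moreover have "r*(s/D) + s*(-r/D) = 0" using D by (simp add: field_simps)
    moreover have "r*(-q/D) + s*(p/D) = 1" using D by (simp add: field_simps) (simp add: D_def)
    ultimately show ?thesis by simp
  qed
  finally show ?thesis by (simp add: I0_def)
qed

lemma agree_Phi: "agree d x y \<Longrightarrow> d \<le> 3 \<Longrightarrow> agree (Suc d) (Phi a x) (Phi a y)"
proof -
  assume xy: "agree d x y" and d: "d \<le> 3"
  have "agree (d + 2 - 1) (jcomp (a - linj a) x) (jcomp (a - linj a) y)"
    by (rule agree_comp[OF ordge2_N]) (use xy d in auto)
  then have "agree (Suc d) (I0 - jcomp (a - linj a) x) (I0 - jcomp (a - linj a) y)"
    by (intro agree_diff agree_refl) simp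
  then have "agree (Suc d + 1 - 1) (Phi a x) (Phi a y)"
    unfolding Phi_def by (intro agree_comp[OF ordge1_all]) (use d in auto)
  then show ?thesis by simp
qed

lemma agree_Phi0: "agree 1 (linv a) (Phi a (linv a))"
proof -
  have "agree (0 + 2 - 1) (jcomp (a - linj a) (linv a)) (jcomp (a - linj a) 0)"
    by (rule agree_comp[OF ordge2_N]) (auto intro: agree_0)
  then have "agree 1 (I0 - jcomp (a - linj a) (linv a)) (I0 - 0)"
    by (intro agree_diff agree_refl) (simp add: jcomp_zero_right)
  then have "agree (1 + 1 - 1) (Phi a (linv a)) (jcomp (linv a) I0)"
    unfolding Phi_def by (intro agree_comp[OF ordge1_all]) auto
  then show ?thesis by (simp add: jcomp_I_right agree_sym)
qed

lemma agree_iter: "k \<le> 3 \<Longrightarrow> agree (Suc k) ((Phi a ^^ k) (linv a)) ((Phi a ^^ Suc k) (linv a))"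
proof (induction k)
  case 0 then show ?case using agree_Phi0 by simp
next
  case (Suc k)
  then show ?case using agree_Phi[of "Suc k"] by simp
qed

lemma Phi_jinv: "Phi a (jinv a) = jinv a"
proof -
  have "agree 4 ((Phi a ^^ 3) (linv a)) ((Phi a ^^ Suc 3) (linv a))"
    using agree_iter[of 3 a] by simp
  then have e: "(Phi a ^^ 3) (linv a) = (Phi a ^^ Suc 3) (linv a)" by (rule agree_eq)
  have "Phi a (jinv a) = (Phi a ^^ Suc 3) (linv a)" unfolding jinv_def by (rule funpow.simps(2)[symmetric, THEN fun_cong, unfolded comp_def])
  also have "\<dots> = jinv a" unfolding jinv_def by (rule e[symmetric])
  finally show ?thesis .
qed

lemma agree1_iter: "k \<le> 3 \<Longrightarrow> agree 1 (linv a) ((Phi a ^^ k) (linv a))"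
proof (induction k)
  case 0 then show ?case by (simp add: agree_refl)
next
  case (Suc k)
  have "agree 1 ((Phi a ^^ k) (linv a)) ((Phi a ^^ Suc k) (linv a))"
    using agree_mono[OF agree_iter[of k a]] Suc by simp
  then show ?case using Suc by (auto intro: agree_trans)
qed

lemma agree1_jinv: "agree 1 (linv a) (jinv a)"
  unfolding jinv_def by (rule agree1_iter) simp

lemma jinv_right: "Dj a \<noteq> 0 \<Longrightarrow> jcomp a (jinv a) = I0"
proof -
  assume D: "Dj a \<noteq> 0"
  let ?N = "a - linj a" and ?x = "jinv a"
  have "jcomp a ?x = jcomp (linj a + ?N) ?x" by simp
  also have "\<dots> = jcomp (linj a) ?x + jcomp ?N ?x" by (rule jcomp_add_left)
  also have "jcomp (linj a) ?x = jcomp (linj a) (Phi a ?x)" by (simp add: Phi_jinv)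
  also have "\<dots> = I0 - jcomp ?N ?x"
    unfolding Phi_def jcomp_assoc jcomp_linj_linv[OF D] jcomp_I_left ..
  finally show ?thesis by simp
qed

lemma coef_linv:
  "coef (linv a) 0 1 0 = coef a 1 0 1 / Dj a" "coef (linv a) 0 0 1 = - coef a 0 0 1 / Dj a"
  "coef (linv a) 1 1 0 = - coef a 1 1 0 / Dj a" "coef (linv a) 1 0 1 = coef a 0 1 0 / Dj a"
  by (simp_all add: linv_def coef_lj)

lemma coef_jinv_lin: "i + j \<le> 1 \<Longrightarrow> coef (jinv a) c i j = coef (linv a) c i j"
  using agree_coef[OF agree1_jinv] by simp

lemma Dj_jinv: "Dj a \<noteq> 0 \<Longrightarrow> Dj (jinv a) = 1 / Dj a"
proof -
  assume D: "Dj a \<noteq> 0"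
  have "Dj (jinv a) = Dj (linv a)" unfolding Dj_def by (simp add: coef_jinv_lin)
  also have "\<dots> = 1 / Dj a"
  proof -
    define p q r s where "p = coef a 0 1 0" "q = coef a 0 0 1" "r = coef a 1 1 0" "s = coef a 1 0 1"
    define E where "E = p * s - q * r"
    have E: "E \<noteq> 0" using D by (simp add: E_def Dj_def p_q_r_s_def)
    have e: "Dj a = E" by (simp add: E_def Dj_def p_q_r_s_def)
    have "Dj (linv a) = (s/E) * (p/E) - (-q/E) * (-r/E)"
      unfolding Dj_def[of "linv a"] using coef_linv[of a] by (simp add: e p_q_r_s_def)
    also have "\<dots> = (p * s - q * r) / (E * E)" using E by (simp add: field_simps)
    also have "\<dots> = 1 / E" using E by (simp add: E_def[symmetric])
    finally show ?thesis by (simp add: e)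
  qed
  finally show ?thesis .
qed

lemma jinv_left: "Dj a \<noteq> 0 \<Longrightarrow> jcomp (jinv a) a = I0"
proof -
  assume D: "Dj a \<noteq> 0"
  let ?x = "jinv a"
  have Dx: "Dj ?x \<noteq> 0" using Dj_jinv[OF D] D by simp
  let ?y = "jinv ?x"
  have "a = jcomp a (jcomp ?x ?y)" by (simp add: jinv_right[OF Dx] jcomp_I_right)
  also have "\<dots> = ?y" by (simp add: jcomp_assoc jinv_right[OF D] jcomp_I_left)
  finally show ?thesis using jinv_right[OF Dx] by simp
qed


inductive rf :: "'a::euclidean_space set \<Rightarrow> ('a \<Rightarrow> real) \<Rightarrow> bool" for U where
  rf_const: "rf U (\<lambda>x. c)"
| rf_lin: "bounded_linear L \<Longrightarrow> rf U L"
| rf_add: "rf U f \<Longrightarrow> rf U g \<Longrightarrow> rf U (\<lambda>x. f x + g x)"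
| rf_mul: "rf U f \<Longrightarrow> rf U g \<Longrightarrow> rf U (\<lambda>x. f x * g x)"
| rf_inv: "rf U f \<Longrightarrow> (\<forall>x\<in>U. f x \<noteq> 0) \<Longrightarrow> rf U (\<lambda>x. inverse (f x))"
| rf_cong: "rf U f \<Longrightarrow> (\<forall>x\<in>U. f x = g x) \<Longrightarrow> rf U g"

lemma rf_deriv:
  assumes U: "open U" and f: "rf U f"
  shows "(\<forall>x\<in>U. f differentiable (at x)) \<and> (\<forall>v. rf U (\<lambda>x. frechet_derivative f (at x) v))"
  using f
proof (induction rule: rf.induct)
  case (rf_const c)
  have "\<And>x. frechet_derivative (\<lambda>x. c) (at x) = (\<lambda>h. 0)"
    by (rule frechet_derivative_at[symmetric]) simp
  then show ?case by (auto simp: differentiable_def intro: rf.rf_const)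
next
  case (rf_lin L)
  have "\<And>x. frechet_derivative L (at x) = L"
    by (rule frechet_derivative_at[symmetric], rule bounded_linear_imp_has_derivative[OF rf_lin])
  then show ?case using rf_lin bounded_linear_imp_has_derivative[OF rf_lin]
    by (auto simp: differentiable_def intro: rf.rf_const)
next
  case (rf_add f g)
  have d: "\<forall>x\<in>U. (\<lambda>x. f x + g x) differentiable (at x)"
    using rf_add.IH by (auto intro: differentiable_add)
  have "\<forall>x\<in>U. frechet_derivative (\<lambda>x. f x + g x) (at x) v = frechet_derivative f (at x) v + frechet_derivative g (at x) v" for v
  proof
    fix x assume x: "x \<in> U"
    have "((\<lambda>x. f x + g x) has_derivative (\<lambda>h. frechet_derivative f (at x) h + frechet_derivative g (at x) h)) (at x)"
      using rf_add.IH x by (intro has_derivative_add) (auto simp: frechet_derivative_works)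
    then show "frechet_derivative (\<lambda>x. f x + g x) (at x) v = frechet_derivative f (at x) v + frechet_derivative g (at x) v"
      by (simp add: frechet_derivative_at[symmetric])
  qed
  note eq = this
  have "rf U (\<lambda>x. frechet_derivative (\<lambda>x. f x + g x) (at x) v)" for v
  proof -
    have "rf U (\<lambda>x. frechet_derivative f (at x) v + frechet_derivative g (at x) v)"
      using rf_add.IH by (intro rf.rf_add) auto
    then show ?thesis by (rule rf.rf_cong) (use eq in auto)
  qed
  then show ?case using d by blast
next
  case (rf_mul f g)
  have d: "\<forall>x\<in>U. (\<lambda>x. f x * g x) differentiable (at x)"
    using rf_mul.IH by (auto intro: differentiable_mult)
  have "\<forall>x\<in>U. frechet_derivative (\<lambda>x. f x * g x) (at x) v = f x * frechet_derivative g (at x) v + frechet_derivative f (at x) v * g x" for v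
  proof
    fix x assume x: "x \<in> U"
    have "((\<lambda>x. f x * g x) has_derivative (\<lambda>h. f x * frechet_derivative g (at x) h + frechet_derivative f (at x) h * g x)) (at x)"
      using rf_mul.IH x by (intro has_derivative_mult) (auto simp: frechet_derivative_works)
    then show "frechet_derivative (\<lambda>x. f x * g x) (at x) v = f x * frechet_derivative g (at x) v + frechet_derivative f (at x) v * g x"
      by (simp add: frechet_derivative_at[symmetric])
  qed
  note eq = this
  have "rf U (\<lambda>x. frechet_derivative (\<lambda>x. f x * g x) (at x) v)" for v
  proof -
    have "rf U (\<lambda>x. f x * frechet_derivative g (at x) v + frechet_derivative f (at x) v * g x)"
      using rf_mul by (intro rf.rf_add rf.rf_mul) auto
    then show ?thesis by (rule rf.rf_cong) (use eq in auto)
  qed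
  then show ?case using d by blast
next
  case (rf_inv f)
  have hd: "((\<lambda>x. inverse (f x)) has_derivative (\<lambda>h. - (inverse (f x) * frechet_derivative f (at x) h * inverse (f x)))) (at x)"
    if x: "x \<in> U" for x
    using rf_inv x by (intro Deriv.has_derivative_inverse) (auto simp: frechet_derivative_works)
  have d: "\<forall>x\<in>U. (\<lambda>x. inverse (f x)) differentiable (at x)"
    using hd by (auto simp: differentiable_def)
  have "\<forall>x\<in>U. frechet_derivative (\<lambda>x. inverse (f x)) (at x) v =
      (-1) * (inverse (f x) * frechet_derivative f (at x) v * inverse (f x))" for v
  proof
    fix x assume "x \<in> U"
    from fun_cong[OF frechet_derivative_at[OF hd[OF this]], of v, symmetric] show "frechet_derivative (\<lambda>x. inverse (f x)) (at x) v =
      (-1) * (inverse (f x) * frechet_derivative f (at x) v * inverse (f x))"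
      by (simp only: mult_minus1)
  qed
  note eq = this
  have "rf U (\<lambda>x. frechet_derivative (\<lambda>x. inverse (f x)) (at x) v)" for v
  proof -
    have i: "rf U (\<lambda>x. inverse (f x))" using rf_inv by (intro rf.rf_inv) auto
    have fd: "rf U (\<lambda>x. frechet_derivative f (at x) v)" using rf_inv by auto
    have "rf U (\<lambda>x. (-1) * (inverse (f x) * frechet_derivative f (at x) v * inverse (f x)))"
      by (rule rf.rf_mul[OF rf.rf_const rf.rf_mul[OF rf.rf_mul[OF i fd] i]])
    then show ?thesis by (rule rf.rf_cong) (use eq in auto)
  qed
  then show ?case using d by blast
next
  case (rf_cong f g)
  have hg: "(g has_derivative frechet_derivative f (at x)) (at x)" if x: "x \<in> U" for x
  proof -
    have "(f has_derivative frechet_derivative f (at x)) (at x)"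
      using rf_cong.IH x by (simp add: frechet_derivative_works)
    then show ?thesis
      by (rule has_derivative_transform_within_open[OF _ U x]) (use rf_cong.hyps(2) in auto)
  qed
  have e: "\<forall>x\<in>U. frechet_derivative g (at x) = frechet_derivative f (at x)"
    using hg frechet_derivative_at by metis
  have d: "\<forall>x\<in>U. g differentiable (at x)"
    using hg by (auto simp: differentiable_def)
  have "rf U (\<lambda>x. frechet_derivative g (at x) v)" for v
  proof -
    have "rf U (\<lambda>x. frechet_derivative f (at x) v)" using rf_cong.IH by blast
    then show ?thesis by (rule rf.rf_cong) (use e in auto)
  qed
  then show ?case using d by blast
qed

lemma rf_cont: "open U \<Longrightarrow> rf U f \<Longrightarrow> continuous_on U f"
proof -
  assume U: "open U" and f: "rf U f"
  have "\<forall>x\<in>U. f differentiable (at x)" using rf_deriv[OF U f] by blast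
  then have "\<forall>x\<in>U. isCont f x" using differentiable_imp_continuous_within by blast
  then show ?thesis by (rule continuous_at_imp_continuous_on)
qed

lemma rf_Cdir: "open U \<Longrightarrow> rf U f \<Longrightarrow> Cdir vs U f"
proof (induction vs arbitrary: f)
  case Nil then show ?case by (simp add: rf_cont)
next
  case (Cons v vs)
  have d: "\<forall>x\<in>U. f differentiable (at x)" and r: "rf U (\<lambda>x. frechet_derivative f (at x) v)"
    using rf_deriv[OF Cons.prems] by blast+
  have "Cdir vs U (\<lambda>x. frechet_derivative f (at x) v)" by (rule Cons.IH[OF Cons.prems(1) r])
  then show ?case using d by simp
qed

definition vf :: "'a::euclidean_space set \<Rightarrow> ('a \<Rightarrow> 'b::euclidean_space) \<Rightarrow> bool" where
  "vf U f \<longleftrightarrow> (\<forall>b\<in>Basis. rf U (\<lambda>x. f x \<bullet> b))"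

lemma vf_Cdir: "open U \<Longrightarrow> vf U f \<Longrightarrow> Cdir vs U f"
proof (induction vs arbitrary: f)
  case Nil then show ?case
    by (simp add: continuous_on_componentwise[of U f] rf_cont vf_def)
next
  case (Cons v vs)
  have d: "\<forall>x\<in>U. f differentiable (at x)"
    using Cons.prems rf_deriv unfolding vf_def
    by (subst differentiable_componentwise_within) blast
  have "vf U (\<lambda>x. frechet_derivative f (at x) v)"
    unfolding vf_def
  proof
    fix b :: 'b assume b: "b \<in> Basis"
    have "\<forall>x\<in>U. frechet_derivative (\<lambda>y. f y \<bullet> b) (at x) v = frechet_derivative f (at x) v \<bullet> b"
    proof
      fix x assume x: "x \<in> U"
      have "((\<lambda>y. f y \<bullet> b) has_derivative (\<lambda>h. frechet_derivative f (at x) h \<bullet> b)) (at x)"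
        using d x by (intro has_derivative_inner_left) (auto simp: frechet_derivative_works)
      then show "frechet_derivative (\<lambda>y. f y \<bullet> b) (at x) v = frechet_derivative f (at x) v \<bullet> b"
        by (simp add: frechet_derivative_at[symmetric])
    qed
    moreover have "rf U (\<lambda>x. frechet_derivative (\<lambda>y. f y \<bullet> b) (at x) v)"
      using rf_deriv[OF Cons.prems(1)] Cons.prems(2) b by (auto simp: vf_def)
    ultimately show "rf U (\<lambda>x. frechet_derivative f (at x) v \<bullet> b)"
      by (auto intro: rf_cong)
  qed
  then show ?case using d Cons by simp
qed

lemma vf_smooth_on: "open U \<Longrightarrow> vf U f \<Longrightarrow> smooth_on U f"
  by (simp add: smooth_on_def vf_Cdir)

lemma smooth_mapI:
  assumes "open V" "S \<subseteq> V" "vf V g" "\<And>y. y \<in> S \<Longrightarrow> g y = f y"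
  shows "smooth_map S f"
  unfolding smooth_map_def using assms vf_smooth_on by blast

lemma rf_diff: "rf U f \<Longrightarrow> rf U g \<Longrightarrow> rf U (\<lambda>x. f x - g x)"
proof -
  assume f: "rf U f" and g: "rf U g"
  have "rf U (\<lambda>x. f x + (-1) * g x)" by (intro rf_add rf_mul f g rf_const)
  then show ?thesis by (rule rf_cong) simp
qed

lemma rf_minus: "rf U f \<Longrightarrow> rf U (\<lambda>x. - f x)"
proof -
  assume f: "rf U f"
  have "rf U (\<lambda>x. (-1) * f x)" by (intro rf_mul f rf_const)
  then show ?thesis by (rule rf_cong) simp
qed

lemma rf_divide: "rf U f \<Longrightarrow> rf U g \<Longrightarrow> \<forall>x\<in>U. g x \<noteq> 0 \<Longrightarrow> rf U (\<lambda>x. f x / g x)"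
proof -
  assume f: "rf U f" and g: "rf U g" and nz: "\<forall>x\<in>U. g x \<noteq> 0"
  have "rf U (\<lambda>x. f x * inverse (g x))" by (intro rf_mul f rf_inv g nz)
  then show ?thesis by (rule rf_cong) (simp add: divide_inverse)
qed

lemma rf_sum: "finite A \<Longrightarrow> (\<And>a. a \<in> A \<Longrightarrow> rf U (f a)) \<Longrightarrow> rf U (\<lambda>x. \<Sum>a\<in>A. f a x)"
proof (induction A rule: finite_induct)
  case empty then show ?case by (simp add: rf_const)
next
  case (insert a A)
  have "rf U (\<lambda>x. f a x + (\<Sum>a\<in>A. f a x))" using insert by (intro rf_add) auto
  then show ?case using insert by simp
qed

lemma rf_if: "rf U f \<Longrightarrow> rf U g \<Longrightarrow> rf U (\<lambda>x. if P then f x else g x)"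
  by (cases P) auto

lemma rf_inner: "rf U (\<lambda>x. x \<bullet> b)"
  by (rule rf_lin) (rule bounded_linear_inner_left)

lemma vf_pair: "vf U f \<Longrightarrow> vf U g \<Longrightarrow> vf U (\<lambda>x. (f x, g x))"
  unfolding vf_def Basis_prod_def by (auto simp: inner_Pair)

lemma vf_vec: "(\<And>k. rf U (\<lambda>x. f x $ k)) \<Longrightarrow> vf U f"
  unfolding vf_def Basis_vec_def by (auto simp: inner_axis)

lemma vf_const: "vf U (\<lambda>x. c)"
  unfolding vf_def by (auto intro: rf_const)


definition jr :: "'a::euclidean_space set \<Rightarrow> ('a \<Rightarrow> jet) \<Rightarrow> bool" where
  "jr U A \<longleftrightarrow> (\<forall>c i j. rf U (\<lambda>x. coef (A x) c i j))"

lemma jrD: "jr U A \<Longrightarrow> rf U (\<lambda>x. coef (A x) c i j)" by (simp add: jr_def)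

lemma jr_vf: "jr U A \<Longrightarrow> vf U A"
proof (rule vf_vec)
  fix k assume A: "jr U A"
  obtain c i j where r: "Rep_jidx k = (c,i,j)" by (cases "Rep_jidx k") auto
  then have m: "(c,i,j) \<in> jidx_set" using Rep_jidx[of k] by simp
  have "Abs_jidx (c,i,j) = k" using r Rep_jidx_inverse[of k] by simp
  then have "\<forall>x\<in>U. coef (A x) c i j = A x $ k" using m by (simp add: coef_def)
  then show "rf U (\<lambda>x. A x $ k)" by (rule rf_cong[OF jrD[OF A]])
qed

lemma jr_lin: "bounded_linear L \<Longrightarrow> jr U L"
  unfolding jr_def coef_def
proof (intro allI)
  fix c i j assume L: "bounded_linear L"
  show "rf U (\<lambda>x. if (c, i, j) \<in> jidx_set then L x $ Abs_jidx (c, i, j) else 0)"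
    by (rule rf_if[OF rf_lin[OF bounded_linear_compose[OF bounded_linear_vec_nth L]] rf_const])
qed

lemma jr_const: "jr U (\<lambda>x. c)" by (simp add: jr_def rf_const)

lemma jr_add: "jr U A \<Longrightarrow> jr U B \<Longrightarrow> jr U (\<lambda>x. A x + B x)"
  by (simp add: jr_def rf_add)
lemma jr_diff: "jr U A \<Longrightarrow> jr U B \<Longrightarrow> jr U (\<lambda>x. A x - B x)"
  by (simp add: jr_def rf_diff)

lemma rf_pmul: "(\<And>i j. rf U (\<lambda>x. P x i j)) \<Longrightarrow> (\<And>i j. rf U (\<lambda>x. Q x i j)) \<Longrightarrow>
   rf U (\<lambda>x. pmul (P x) (Q x) i j)"
  unfolding pmul_def by (intro rf_sum rf_mul) auto

lemma rf_ppow: "(\<And>i j. rf U (\<lambda>x. P x i j)) \<Longrightarrow> rf U (\<lambda>x. ppow (P x) n i j)"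
proof (induction n arbitrary: i j)
  case 0 then show ?case by (simp add: rf_const)
next
  case (Suc n) then show ?case by (simp add: rf_pmul)
qed

lemma coef_jcomp: "coef (jcomp a b) c i j = (if (c,i,j) \<in> jidx_set then
   (\<Sum>(a',b')\<in>jmonos. coef a c a' b' * pmul (ppow (coef b 0) a') (ppow (coef b 1) b') i j) else 0)"
  by (simp add: jcomp_def coef_mkjet del: jidx_set_iff)

lemma jr_jcomp: "jr U A \<Longrightarrow> jr U B \<Longrightarrow> jr U (\<lambda>x. jcomp (A x) (B x))"
  unfolding jr_def coef_jcomp
  by (intro allI rf_if rf_const rf_sum finite_jmonos)
     (auto simp: case_prod_beta intro!: rf_mul rf_pmul rf_ppow)

lemma jr_lj: "rf U a \<Longrightarrow> rf U b \<Longrightarrow> rf U c \<Longrightarrow> rf U d \<Longrightarrow>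
   jr U (\<lambda>x. lj (a x) (b x) (c x) (d x))"
  unfolding jr_def coef_lj by (intro allI rf_if rf_const) auto

lemma jr_jpair: "jr U A \<Longrightarrow> jr U B \<Longrightarrow> jr U (\<lambda>x. jpair (A x) (B x))"
  unfolding jr_def coef_jpair by (intro allI rf_if rf_const) auto

lemma rf_Dj: "jr U A \<Longrightarrow> rf U (\<lambda>x. Dj (A x))"
  unfolding Dj_def by (intro rf_diff rf_mul jrD)

lemma jr_linj: "jr U A \<Longrightarrow> jr U (\<lambda>x. linj (A x))"
  unfolding linj_def by (intro jr_lj jrD)

lemma jr_linv: "jr U A \<Longrightarrow> \<forall>x\<in>U. Dj (A x) \<noteq> 0 \<Longrightarrow> jr U (\<lambda>x. linv (A x))"
  unfolding linv_def by (intro jr_lj rf_divide rf_minus jrD rf_Dj)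

lemma jr_Phi: "jr U A \<Longrightarrow> \<forall>x\<in>U. Dj (A x) \<noteq> 0 \<Longrightarrow> jr U X \<Longrightarrow> jr U (\<lambda>x. Phi (A x) (X x))"
  unfolding Phi_def by (intro jr_jcomp jr_linv jr_diff jr_const jr_linj)

lemma jr_jinv: "jr U A \<Longrightarrow> \<forall>x\<in>U. Dj (A x) \<noteq> 0 \<Longrightarrow> jr U (\<lambda>x. jinv (A x))"
proof -
  assume A: "jr U A" and D: "\<forall>x\<in>U. Dj (A x) \<noteq> 0"
  have "jr U (\<lambda>x. (Phi (A x) ^^ n) (linv (A x)))" for n
  proof (induction n)
    case 0 then show ?case using jr_linv[OF A D] by simp
  next
    case (Suc n) then show ?case using jr_Phi[OF A D Suc] by simp
  qed
  then show ?thesis by (simp add: jinv_def)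
qed


definition L00 :: "jet \<Rightarrow> real" where "L00 g = coef g 0 1 0"
definition L01 :: "jet \<Rightarrow> real" where "L01 g = coef g 0 0 1"
definition L10 :: "jet \<Rightarrow> real" where "L10 g = coef g 1 1 0"
definition L11 :: "jet \<Rightarrow> real" where "L11 g = coef g 1 0 1"

lemma L_jcomp[simp]:
  "L00 (jcomp a b) = L00 a * L00 b + L01 a * L10 b"
  "L01 (jcomp a b) = L00 a * L01 b + L01 a * L11 b"
  "L10 (jcomp a b) = L10 a * L00 b + L11 a * L10 b"
  "L11 (jcomp a b) = L10 a * L01 b + L11 a * L11 b"
  by (simp_all add: L00_def L01_def L10_def L11_def)

lemma L_lj[simp]:
  "L00 (lj p q r s) = p" "L01 (lj p q r s) = q" "L10 (lj p q r s) = r" "L11 (lj p q r s) = s"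
  by (simp_all add: L00_def L01_def L10_def L11_def coef_lj)

lemma L_jpair[simp]:
  "L00 (jpair a b) = L00 a" "L01 (jpair a b) = L01 a" "L10 (jpair a b) = L10 b" "L11 (jpair a b) = L11 b"
  by (simp_all add: L00_def L01_def L10_def L11_def coef_jpair)

lemma L_I0[simp]: "L00 I0 = 1" "L01 I0 = 0" "L10 I0 = 0" "L11 I0 = 1"
  by (simp_all add: I0_def)

lemma Dj_L: "Dj g = L00 g * L11 g - L01 g * L10 g"
  by (simp add: Dj_def L00_def L01_def L10_def L11_def)

lemma L_jinv:
  "L00 (jinv a) = L11 a / Dj a" "L01 (jinv a) = - L01 a / Dj a"
  "L10 (jinv a) = - L10 a / Dj a" "L11 (jinv a) = L00 a / Dj a"
  by (simp_all add: L00_def L01_def L10_def L11_def coef_jinv_lin linv_def coef_lj)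

lemma lj_I0: "a = 1 \<Longrightarrow> b = 0 \<Longrightarrow> c = 0 \<Longrightarrow> d = 1 \<Longrightarrow> lj a b c d = I0"
  by (simp add: I0_def)

lemma linpart_nth:
  "linpart g $ 1 $ 1 = L00 g" "linpart g $ 1 $ 2 = L01 g"
  "linpart g $ 2 $ 1 = L10 g" "linpart g $ 2 $ 2 = L11 g"
  by (simp_all add: linpart_def L00_def L01_def L10_def L11_def)

lemma det_linpart: "det (linpart g) = Dj g"
  by (simp add: det_2 linpart_nth Dj_L)

lemma linpart_zero: "linpart g = 0 \<longleftrightarrow> L00 g = 0 \<and> L01 g = 0 \<and> L10 g = 0 \<and> L11 g = 0"
  by (simp add: vec_eq_iff forall_2 linpart_nth)

lemma Gjet_iff: "g \<in> Gjet \<longleftrightarrow> Dj g \<noteq> 0"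
  by (simp add: Gjet_def invertible_det_nz det_linpart)

lemma J1_iff: "g \<in> J1 \<longleftrightarrow> Dj g = 0 \<and> \<not> (L00 g = 0 \<and> L01 g = 0 \<and> L10 g = 0 \<and> L11 g = 0)"
proof -
  have "rank (linpart g) = 1 \<longleftrightarrow> rank (linpart g) \<noteq> 0 \<and> rank (linpart g) < 2"
    using rank_bound[of "linpart g"] by auto
  also have "\<dots> \<longleftrightarrow> linpart g \<noteq> 0 \<and> det (linpart g) = 0"
    by (simp add: rank_eq_0 det_eq_0_rank)
  finally show ?thesis unfolding J1_def mem_Collect_eq linpart_zero det_linpart by auto
qed

lemma coef_I0: "coef I0 0 i j = (if i = 1 \<and> j = 0 then 1 else 0)"
  by (auto simp: I0_def coef_lj)

lemma Njet_iff: "f \<in> Njet \<longleftrightarrow> jpair I0 f = f \<and> L10 f = 0 \<and> L11 f = 0"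
proof -
  have "jpair I0 f = f \<longleftrightarrow> (\<forall>i j. coef f 0 i j = coef I0 0 i j)"
  proof
    assume "jpair I0 f = f"
    then show "\<forall>i j. coef f 0 i j = coef I0 0 i j"
      by (metis coef_jpair)
  next
    assume h: "\<forall>i j. coef f 0 i j = coef I0 0 i j"
    show "jpair I0 f = f"
    proof (rule jet_eqI)
      fix c i j assume "(c, i, j) \<in> jidx_set"
      then have "c = 0 \<or> c = 1" by auto
      then show "coef (jpair I0 f) c i j = coef f c i j" by (auto simp: coef_jpair h)
    qed
  qed
  then show ?thesis
    by (auto simp: Njet_def L10_def L11_def coef_I0)
qed


lemma key_real:
  fixes g00 g01 g10 g11 v1 v2 a b d :: real
  assumes Dg: "g00 * g11 - g01 * g10 = 0"
    and c0: "c0 = g00 * v1 + g01 * v2" and c1: "c1 = g10 * v1 + g11 * v2"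
    and n: "n = c0 * c0 + c1 * c1" "n \<noteq> 0" and a: "a \<noteq> 0" and d: "d \<noteq> 0"
    and p: "p00 = c0 * a" "p01 = c0 * b - c1 * d" "p10 = c1 * a" "p11 = c1 * b + c0 * d"
    and Dp: "Dp = p00 * p11 - p01 * p10"
  shows "Dp = n * a * d"
    "(p11 / Dp) * g00 + (- p01 / Dp) * g10 = (g00 * c0 + g10 * c1) / (n * a)"
    "(p11 / Dp) * g01 + (- p01 / Dp) * g11 = (g01 * c0 + g11 * c1) / (n * a)"
    "(- p10 / Dp) * g00 + (p00 / Dp) * g10 = 0"
    "(- p10 / Dp) * g01 + (p00 / Dp) * g11 = 0"
proof -
  show D: "Dp = n * a * d" unfolding Dp p n by (simp add: algebra_simps)
  have z1: "c1 * g00 - c0 * g10 = 0" unfolding c0 c1 using Dg by (simp add: algebra_simps)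
  have z2: "c1 * g01 - c0 * g11 = 0" unfolding c0 c1 using Dg by (simp add: algebra_simps)
  have nz: "Dp \<noteq> 0" using D n a d by simp
  have "p11 * g00 - p01 * g10 = b * (c1 * g00 - c0 * g10) + d * (g00 * c0 + g10 * c1)"
    unfolding p by (simp add: algebra_simps)
  then have e1: "p11 * g00 - p01 * g10 = d * (g00 * c0 + g10 * c1)" using z1 by simp
  have "p11 * g01 - p01 * g11 = b * (c1 * g01 - c0 * g11) + d * (g01 * c0 + g11 * c1)"
    unfolding p by (simp add: algebra_simps)
  then have e2: "p11 * g01 - p01 * g11 = d * (g01 * c0 + g11 * c1)" using z2 by simp
  have e3: "- p10 * g00 + p00 * g10 = - a * (c1 * g00 - c0 * g10)" unfolding p by (simp add: algebra_simps)
  have e4: "- p10 * g01 + p00 * g11 = - a * (c1 * g01 - c0 * g11)" unfolding p by (simp add: algebra_simps)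
  show "(p11 / Dp) * g00 + (- p01 / Dp) * g10 = (g00 * c0 + g10 * c1) / (n * a)"
  proof -
    have "(p11 / Dp) * g00 + (- p01 / Dp) * g10 = (p11 * g00 - p01 * g10) / Dp"
      using nz by (simp add: field_simps)
    also have "\<dots> = (g00 * c0 + g10 * c1) / (n * a)" unfolding e1 D using d by simp
    finally show ?thesis .
  qed
  show "(p11 / Dp) * g01 + (- p01 / Dp) * g11 = (g01 * c0 + g11 * c1) / (n * a)"
  proof -
    have "(p11 / Dp) * g01 + (- p01 / Dp) * g11 = (p11 * g01 - p01 * g11) / Dp"
      using nz by (simp add: field_simps)
    also have "\<dots> = (g01 * c0 + g11 * c1) / (n * a)" unfolding e2 D using d by simp
    finally show ?thesis .
  qed
  show "(- p10 / Dp) * g00 + (p00 / Dp) * g10 = 0"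
  proof -
    have "(- p10 / Dp) * g00 + (p00 / Dp) * g10 = (- p10 * g00 + p00 * g10) / Dp"
      using nz by (simp add: field_simps)
    then show ?thesis unfolding e3 z1 by simp
  qed
  show "(- p10 / Dp) * g01 + (p00 / Dp) * g11 = 0"
  proof -
    have "(- p10 / Dp) * g01 + (p00 / Dp) * g11 = (- p10 * g01 + p00 * g11) / Dp"
      using nz by (simp add: field_simps)
    then show ?thesis unfolding e4 z2 by simp
  qed
qed

context fixes v1 v2 :: real
begin

definition cc0 :: "jet \<Rightarrow> real" where "cc0 g = L00 g * v1 + L01 g * v2"
definition cc1 :: "jet \<Rightarrow> real" where "cc1 g = L10 g * v1 + L11 g * v2"
definition nn :: "jet \<Rightarrow> real" where "nn g = cc0 g * cc0 g + cc1 g * cc1 g"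
definition om1 :: "jet \<Rightarrow> real" where "om1 g = L00 g * cc0 g + L10 g * cc1 g"
definition om2 :: "jet \<Rightarrow> real" where "om2 g = L01 g * cc0 g + L11 g * cc1 g"
definition WW :: "jet \<Rightarrow> real" where "WW g = om1 g * om1 g + om2 g * om2 g"

definition Mj :: "jet \<Rightarrow> jet" where "Mj g = lj (cc0 g) (- cc1 g) (cc1 g) (cc0 g)"
definition Minvj :: "jet \<Rightarrow> jet" where
  "Minvj g = lj (cc0 g / nn g) (cc1 g / nn g) (- cc1 g / nn g) (cc0 g / nn g)"
definition Tj :: "jet \<Rightarrow> jet" where
  "Tj g = lj (om1 g / nn g) (om2 g / nn g) (- om2 g / nn g) (om1 g / nn g)"
definition Tinvj :: "jet \<Rightarrow> jet" where
  "Tinvj g = lj (om1 g * nn g / WW g) (- om2 g * nn g / WW g) (om2 g * nn g / WW g) (om1 g * nn g / WW g)"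

lemma nn_om: "nn g = v1 * om1 g + v2 * om2 g"
  by (simp add: nn_def om1_def om2_def cc0_def cc1_def algebra_simps)

lemma WW_nz: "nn g \<noteq> 0 \<Longrightarrow> WW g \<noteq> 0"
proof -
  assume n: "nn g \<noteq> 0"
  have "om1 g \<noteq> 0 \<or> om2 g \<noteq> 0" using n by (auto simp: nn_om)
  then show ?thesis unfolding WW_def
    using sum_squares_eq_zero_iff by blast
qed

lemma Minv_M: assumes n: "nn g \<noteq> 0" shows "jcomp (Minvj g) (Mj g) = I0"
  unfolding Minvj_def Mj_def Tj_def Tinvj_def jcomp_lj_lj
  apply (rule lj_I0)
  subgoal using n WW_nz[OF n] by (simp add: field_simps) (simp add: nn_def)
  subgoal using n WW_nz[OF n] by (simp add: field_simps)
  subgoal using n WW_nz[OF n] by (simp add: field_simps)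
  subgoal using n WW_nz[OF n] by (simp add: field_simps) (simp add: nn_def)
  done

lemma M_Minv: assumes n: "nn g \<noteq> 0" shows "jcomp (Mj g) (Minvj g) = I0"
  unfolding Minvj_def Mj_def Tj_def Tinvj_def jcomp_lj_lj
  apply (rule lj_I0)
  subgoal using n WW_nz[OF n] by (simp add: field_simps) (simp add: nn_def)
  subgoal using n WW_nz[OF n] by (simp add: field_simps)
  subgoal using n WW_nz[OF n] by (simp add: field_simps)
  subgoal using n WW_nz[OF n] by (simp add: field_simps) (simp add: nn_def)
  done

lemma T_Tinv: assumes n: "nn g \<noteq> 0" shows "jcomp (Tj g) (Tinvj g) = I0"
  unfolding Minvj_def Mj_def Tj_def Tinvj_def jcomp_lj_lj
  apply (rule lj_I0)
  subgoal using n WW_nz[OF n] by (simp add: field_simps) (simp add: WW_def)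
  subgoal using n WW_nz[OF n] by (simp add: field_simps)
  subgoal using n WW_nz[OF n] by (simp add: field_simps)
  subgoal using n WW_nz[OF n] by (simp add: field_simps) (simp add: WW_def)
  done

lemma Tinv_T: assumes n: "nn g \<noteq> 0" shows "jcomp (Tinvj g) (Tj g) = I0"
  unfolding Minvj_def Mj_def Tj_def Tinvj_def jcomp_lj_lj
  apply (rule lj_I0)
  subgoal using n WW_nz[OF n] by (simp add: field_simps) (simp add: WW_def)
  subgoal using n WW_nz[OF n] by (simp add: field_simps)
  subgoal using n WW_nz[OF n] by (simp add: field_simps)
  subgoal using n WW_nz[OF n] by (simp add: field_simps) (simp add: WW_def)
  done

definition pp :: "jet \<times> jet \<times> jet \<Rightarrow> jet" where
  "pp e = jcomp (fst e) (jcomp (fst (snd e)) (snd (snd e)))"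

definition hh :: "jet \<times> jet \<times> jet \<Rightarrow> jet \<times> jet \<times> jet \<times> jet" where
  "hh e = (pp e, jcomp (Minvj (pp e)) (fst e), 0, jpair I0 (jcomp (snd (snd e)) (Tinvj (pp e))))"

definition rphi :: "jet \<times> jet \<times> jet \<times> jet \<Rightarrow> jet" where
  "rphi y = jcomp (Mj (fst y)) (fst (snd y))"
definition rk :: "jet \<times> jet \<times> jet \<times> jet \<Rightarrow> jet" where
  "rk y = jcomp (jinv (rphi y)) (fst y)"
definition rpsi :: "jet \<times> jet \<times> jet \<times> jet \<Rightarrow> jet" where
  "rpsi y = jpair (rk y) (jcomp (snd (snd (snd y))) (Tj (fst y)))"
definition rr :: "jet \<times> jet \<times> jet \<times> jet \<Rightarrow> jet \<times> jet \<times> jet" where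
  "rr y = (rphi y, jpair I0 (jcomp (rk y) (jinv (rpsi y))), rpsi y)"

definition Uset :: "jet set" where "Uset = {g \<in> J1. nn g \<noteq> 0}"
definition Fset :: "(jet \<times> jet \<times> jet) set" where
  "Fset = {(a, z, b). a \<in> Gjet \<and> L10 a = 0 \<and> z = 0 \<and> b \<in> Gjet \<and> jpair I0 b = b}"
definition Sset :: "(jet \<times> jet \<times> jet) set" where
  "Sset = {e \<in> Gjet \<times> Njet \<times> Gjet. pp e \<in> Uset}"

end


lemma Njet_L: "f \<in> Njet \<Longrightarrow> L00 f = 1 \<and> L01 f = 0 \<and> L10 f = 0 \<and> L11 f = 0"
proof -
  assume f: "f \<in> Njet"
  then have e: "jpair I0 f = f" and "L10 f = 0" "L11 f = 0" by (auto simp: Njet_iff)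
  moreover have "L00 f = 1" "L01 f = 0" using arg_cong[OF e, of L00] arg_cong[OF e, of L01] by simp_all
  ultimately show ?thesis by simp
qed

lemma pp_J1:
  assumes "e \<in> Gjet \<times> Njet \<times> Gjet" shows "pp e \<in> J1"
proof -
  obtain \<phi> f \<psi> where e: "e = (\<phi>, f, \<psi>)" by (cases e) auto
  have \<phi>: "Dj \<phi> \<noteq> 0" and \<psi>: "Dj \<psi> \<noteq> 0" and f: "f \<in> Njet" using assms e by (auto simp: Gjet_iff)
  note fL = Njet_L[OF f]
  let ?g = "pp e"
  have g: "L00 ?g = L00 \<phi> * L00 \<psi>" "L01 ?g = L00 \<phi> * L01 \<psi>" "L10 ?g = L10 \<phi> * L00 \<psi>" "L11 ?g = L10 \<phi> * L01 \<psi>"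
    using fL by (simp_all add: pp_def e)
  have "Dj ?g = 0" unfolding Dj_L g by (simp add: algebra_simps)
  moreover have "\<not> (L00 ?g = 0 \<and> L01 ?g = 0 \<and> L10 ?g = 0 \<and> L11 ?g = 0)"
  proof
    assume z: "L00 ?g = 0 \<and> L01 ?g = 0 \<and> L10 ?g = 0 \<and> L11 ?g = 0"
    show False
    proof (cases "L00 \<phi> = 0 \<and> L10 \<phi> = 0")
      case True then show False using \<phi> by (simp add: Dj_L)
    next
      case False
      then have "L00 \<psi> = 0 \<and> L01 \<psi> = 0" using z unfolding g by auto
      then show False using \<psi> by (simp add: Dj_L)
    qed
  qed
  ultimately show ?thesis by (simp add: J1_iff)
qed

context fixes v1 v2 :: real
begin

lemma Dj_Minv: "nn v1 v2 g \<noteq> 0 \<Longrightarrow> Dj (Minvj v1 v2 g) = 1 / nn v1 v2 g"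
  unfolding Dj_L Minvj_def by simp (simp add: field_simps, simp add: nn_def algebra_simps)

lemma Dj_Mj: "Dj (Mj v1 v2 g) = nn v1 v2 g"
  unfolding Dj_L Mj_def nn_def by simp

lemma hh_in: assumes e: "e \<in> Sset v1 v2" shows "hh v1 v2 e \<in> Uset v1 v2 \<times> Fset"
proof -
  obtain \<phi> f \<psi> where ee: "e = (\<phi>, f, \<psi>)" by (cases e) auto
  have \<phi>: "Dj \<phi> \<noteq> 0" and \<psi>: "Dj \<psi> \<noteq> 0" and f: "f \<in> Njet" and gU: "pp e \<in> Uset v1 v2"
    using e ee by (auto simp: Gjet_iff Sset_def)
  note fL = Njet_L[OF f]
  define g where "g = pp e"
  have n: "nn v1 v2 g \<noteq> 0" using gU by (simp add: g_def Uset_def)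
  have gL: "L00 g = L00 \<phi> * L00 \<psi>" "L01 g = L00 \<phi> * L01 \<psi>" "L10 g = L10 \<phi> * L00 \<psi>" "L11 g = L10 \<phi> * L01 \<psi>"
    using fL by (simp_all add: pp_def ee g_def)
  define s where "s = L00 \<psi> * v1 + L01 \<psi> * v2"
  define P where "P = L00 \<phi> * L00 \<phi> + L10 \<phi> * L10 \<phi>"
  have c: "cc0 v1 v2 g = L00 \<phi> * s" "cc1 v1 v2 g = L10 \<phi> * s"
    unfolding cc0_def cc1_def gL s_def by (simp_all add: algebra_simps)
  have nE: "nn v1 v2 g = s * s * P" unfolding nn_def c P_def by (simp add: algebra_simps)
  have o: "om1 v1 v2 g = L00 \<psi> * s * P" "om2 v1 v2 g = L01 \<psi> * s * P"
    unfolding om1_def om2_def c gL P_def by (simp_all add: algebra_simps)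
  have sP: "s * P \<noteq> 0" using n nE by auto
  have W: "WW v1 v2 g \<noteq> 0" using WW_nz[OF n] .
  define \<phi>0 where "\<phi>0 = jcomp (Minvj v1 v2 g) \<phi>"
  define \<psi>1 where "\<psi>1 = jpair I0 (jcomp \<psi> (Tinvj v1 v2 g))"
  have h: "hh v1 v2 e = (g, \<phi>0, 0, \<psi>1)" by (simp add: hh_def g_def \<phi>0_def \<psi>1_def ee)
  have G0: "\<phi>0 \<in> Gjet" using \<phi> n by (simp add: Gjet_iff \<phi>0_def Dj_jcomp Dj_Minv)
  have "L10 \<phi>0 = (- cc1 v1 v2 g * L00 \<phi> + cc0 v1 v2 g * L10 \<phi>) / nn v1 v2 g"
    using n by (simp add: \<phi>0_def Minvj_def field_simps)
  also have "\<dots> = 0" unfolding c by (simp add: algebra_simps)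
  finally have L0: "L10 \<phi>0 = 0" .
  have "Dj \<psi>1 = L11 \<psi> * (om1 v1 v2 g * nn v1 v2 g / WW v1 v2 g) + L10 \<psi> * (- om2 v1 v2 g * nn v1 v2 g / WW v1 v2 g)"
    by (simp add: \<psi>1_def Dj_L Tinvj_def algebra_simps)
  also have "\<dots> = (s * P) * Dj \<psi> * nn v1 v2 g / WW v1 v2 g"
    unfolding o Dj_L using W by (simp add: field_simps)
  finally have "Dj \<psi>1 \<noteq> 0" using sP \<psi> n W by simp
  then have G1: "\<psi>1 \<in> Gjet" by (simp add: Gjet_iff)
  have P1: "jpair I0 \<psi>1 = \<psi>1" by (simp add: \<psi>1_def jpair_right)
  show ?thesis unfolding h using gU G0 L0 G1 P1 by (simp add: Fset_def g_def)
qed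

end


context fixes v1 v2 :: real
begin

lemma rr_facts:
  assumes y: "y \<in> Uset v1 v2 \<times> Fset"
  shows "Dj (rphi v1 v2 y) \<noteq> 0" "L10 (rk v1 v2 y) = 0" "L11 (rk v1 v2 y) = 0"
    "Dj (rpsi v1 v2 y) \<noteq> 0" "JC (rpsi v1 v2 y) 0 = JC (rk v1 v2 y) 0"
    "nn v1 v2 (fst y) \<noteq> 0" "fst y \<in> J1"
proof -
  obtain g \<phi>0 z \<psi>1 where yy: "y = (g, \<phi>0, z, \<psi>1)" by (cases y) auto
  have gU: "g \<in> Uset v1 v2" and G0: "Dj \<phi>0 \<noteq> 0" and L0: "L10 \<phi>0 = 0" and G1: "Dj \<psi>1 \<noteq> 0"
    and P1: "jpair I0 \<psi>1 = \<psi>1"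
    using y yy by (auto simp: Fset_def Gjet_iff)
  have n: "nn v1 v2 g \<noteq> 0" and gJ: "g \<in> J1" using gU by (auto simp: Uset_def)
  show "nn v1 v2 (fst y) \<noteq> 0" "fst y \<in> J1" using n gJ yy by simp_all
  have Dg: "L00 g * L11 g - L01 g * L10 g = 0" using gJ by (simp add: J1_iff Dj_L)
  have \<psi>1L: "L00 \<psi>1 = 1" "L01 \<psi>1 = 0" using arg_cong[OF P1, of L00] arg_cong[OF P1, of L01] by simp_all
  define a b d where "a = L00 \<phi>0" "b = L01 \<phi>0" "d = L11 \<phi>0"
  have ad: "a \<noteq> 0" "d \<noteq> 0" using G0 L0 by (auto simp: Dj_L a_b_d_def)
  define \<phi> where "\<phi> = rphi v1 v2 y"
  have \<phi>L: "L00 \<phi> = cc0 v1 v2 g * a" "L01 \<phi> = cc0 v1 v2 g * b - cc1 v1 v2 g * d"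
    "L10 \<phi> = cc1 v1 v2 g * a" "L11 \<phi> = cc1 v1 v2 g * b + cc0 v1 v2 g * d"
    by (simp_all add: \<phi>_def rphi_def yy Mj_def L0 a_b_d_def algebra_simps)
  note K = key_real[OF Dg cc0_def[of v1 v2 g] cc1_def[of v1 v2 g] nn_def[of v1 v2 g] n ad \<phi>L Dj_L[of \<phi>]]
  show D\<phi>: "Dj (rphi v1 v2 y) \<noteq> 0" using K(1) n ad by (simp add: \<phi>_def)
  have rkE: "rk v1 v2 y = jcomp (jinv \<phi>) g" by (simp add: rk_def \<phi>_def yy)
  have kL: "L00 (rk v1 v2 y) = om1 v1 v2 g / (nn v1 v2 g * a)"
    "L01 (rk v1 v2 y) = om2 v1 v2 g / (nn v1 v2 g * a)"
    "L10 (rk v1 v2 y) = 0" "L11 (rk v1 v2 y) = 0"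
    unfolding rkE using K(2-5) by (simp_all add: L_jinv om1_def om2_def)
  show "L10 (rk v1 v2 y) = 0" "L11 (rk v1 v2 y) = 0" using kL by simp_all
  show "JC (rpsi v1 v2 y) 0 = JC (rk v1 v2 y) 0" by (simp add: rpsi_def)
  have W: "WW v1 v2 g \<noteq> 0" using WW_nz[OF n] .
  have "Dj (rpsi v1 v2 y) = (om1 v1 v2 g / (nn v1 v2 g * a)) *
      (L10 \<psi>1 * (om2 v1 v2 g / nn v1 v2 g) + L11 \<psi>1 * (om1 v1 v2 g / nn v1 v2 g))
     - (om2 v1 v2 g / (nn v1 v2 g * a)) *
      (L10 \<psi>1 * (om1 v1 v2 g / nn v1 v2 g) + L11 \<psi>1 * (- om2 v1 v2 g / nn v1 v2 g))"
    unfolding Dj_L using kL by (simp add: rpsi_def yy Tj_def)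
  also have "\<dots> = L11 \<psi>1 * WW v1 v2 g / (nn v1 v2 g * nn v1 v2 g * a)"
    using n ad by (simp add: field_simps WW_def)
  finally show "Dj (rpsi v1 v2 y) \<noteq> 0" using G1 \<psi>1L W n ad by (simp add: Dj_L)
qed

lemma pp_rr: assumes y: "y \<in> Uset v1 v2 \<times> Fset" shows "pp (rr v1 v2 y) = fst y"
proof -
  note F = rr_facts[OF y]
  let ?\<phi> = "rphi v1 v2 y" and ?k = "rk v1 v2 y" and ?\<psi> = "rpsi v1 v2 y"
  have "jcomp (jpair I0 (jcomp ?k (jinv ?\<psi>))) ?\<psi> = jpair (jcomp I0 ?\<psi>) (jcomp (jcomp ?k (jinv ?\<psi>)) ?\<psi>)"
    by (rule jcomp_jpair)
  also have "\<dots> = jpair ?\<psi> ?k"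
    by (simp add: jcomp_I_left flip: jcomp_assoc add: jinv_left[OF F(4)] jcomp_I_right)
  also have "\<dots> = jpair ?k ?k" by (rule jpair_eq_first[OF F(5)])
  also have "\<dots> = ?k" by (rule jpair_same)
  finally have e: "jcomp (jpair I0 (jcomp ?k (jinv ?\<psi>))) ?\<psi> = ?k" .
  have "pp (rr v1 v2 y) = jcomp ?\<phi> ?k" unfolding pp_def rr_def fst_conv snd_conv e ..
  also have "\<dots> = fst y" unfolding rk_def jcomp_assoc jinv_right[OF F(1)] jcomp_I_left ..
  finally show ?thesis .
qed

lemma rr_in: assumes y: "y \<in> Uset v1 v2 \<times> Fset" shows "rr v1 v2 y \<in> Sset v1 v2"
proof -
  note F = rr_facts[OF y]
  have f: "jpair I0 (jcomp (rk v1 v2 y) (jinv (rpsi v1 v2 y))) \<in> Njet"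
    using F by (simp add: Njet_iff jpair_right)
  have "rr v1 v2 y \<in> Gjet \<times> Njet \<times> Gjet" using F f by (simp add: rr_def Gjet_iff)
  moreover have "pp (rr v1 v2 y) \<in> Uset v1 v2" using pp_rr[OF y] F by (simp add: Uset_def)
  ultimately show ?thesis by (simp add: Sset_def)
qed

lemma hh_rr: assumes y: "y \<in> Uset v1 v2 \<times> Fset" shows "hh v1 v2 (rr v1 v2 y) = y"
proof -
  obtain g \<phi>0 z \<psi>1 where yy: "y = (g, \<phi>0, z, \<psi>1)" by (cases y) auto
  have z: "z = 0" and P1: "jpair I0 \<psi>1 = \<psi>1" using y yy by (auto simp: Fset_def)
  note F = rr_facts[OF y]
  have n: "nn v1 v2 g \<noteq> 0" using F yy by simp
  have g: "pp (rr v1 v2 y) = g" using pp_rr[OF y] yy by simp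
  have a: "jcomp (Minvj v1 v2 g) (rphi v1 v2 y) = \<phi>0"
    by (simp add: rphi_def yy jcomp_assoc Minv_M[OF n] jcomp_I_left)
  have b: "jpair I0 (jcomp (rpsi v1 v2 y) (Tinvj v1 v2 g)) = \<psi>1"
    by (simp add: rpsi_def yy jcomp_jpair jpair_right P1 flip: jcomp_assoc add: T_Tinv[OF n] jcomp_I_right)
  show ?thesis unfolding hh_def g using a b z yy by (simp add: rr_def)
qed

lemma rr_hh: assumes e: "e \<in> Sset v1 v2" shows "rr v1 v2 (hh v1 v2 e) = e"
proof -
  obtain \<phi> f \<psi> where ee: "e = (\<phi>, f, \<psi>)" by (cases e) auto
  have \<phi>: "Dj \<phi> \<noteq> 0" and \<psi>: "Dj \<psi> \<noteq> 0" and f: "f \<in> Njet" and gU: "pp e \<in> Uset v1 v2"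
    using e ee by (auto simp: Gjet_iff Sset_def)
  have fI: "jpair I0 f = f" using f by (simp add: Njet_iff)
  define g where "g = pp e"
  have n: "nn v1 v2 g \<noteq> 0" using gU by (simp add: g_def Uset_def)
  let ?y = "hh v1 v2 e"
  have y: "?y = (g, jcomp (Minvj v1 v2 g) \<phi>, 0, jpair I0 (jcomp \<psi> (Tinvj v1 v2 g)))"
    by (simp add: hh_def g_def ee)
  have r1: "rphi v1 v2 ?y = \<phi>"
    by (simp add: y rphi_def jcomp_assoc M_Minv[OF n] jcomp_I_left)
  have fy: "fst ?y = g" by (simp add: y)
  have gE: "g = jcomp \<phi> (jcomp f \<psi>)" by (simp add: g_def pp_def ee)
  have r2: "rk v1 v2 ?y = jcomp f \<psi>"
    unfolding rk_def r1 fy gE jcomp_assoc jinv_left[OF \<phi>] jcomp_I_left ..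
  have fp: "jcomp f \<psi> = jpair \<psi> (jcomp f \<psi>)"
  proof -
    have "jcomp f \<psi> = jcomp (jpair I0 f) \<psi>" using fI by simp
    also have "\<dots> = jpair \<psi> (jcomp f \<psi>)" by (simp add: jcomp_jpair jcomp_I_left)
    finally show ?thesis .
  qed
  have r3: "rpsi v1 v2 ?y = \<psi>"
  proof -
    have "rpsi v1 v2 ?y = jpair (jcomp f \<psi>) (jcomp (jpair I0 (jcomp \<psi> (Tinvj v1 v2 g))) (Tj v1 v2 g))"
      unfolding rpsi_def r2 by (simp add: y)
    also have "\<dots> = jpair (jcomp f \<psi>) \<psi>"
      by (simp add: jcomp_jpair jpair_right flip: jcomp_assoc add: Tinv_T[OF n] jcomp_I_right)
    also have "\<dots> = \<psi>" by (subst fp) (simp add: jpair_left jpair_same)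
    finally show ?thesis .
  qed
  have r4: "jpair I0 (jcomp (rk v1 v2 ?y) (jinv (rpsi v1 v2 ?y))) = f"
    by (simp add: r2 r3 flip: jcomp_assoc add: jinv_right[OF \<psi>] jcomp_I_right fI)
  show ?thesis unfolding rr_def using r1 r3 r4 ee by simp
qed

end


lemma rf_subset: "rf U f \<Longrightarrow> V \<subseteq> U \<Longrightarrow> rf V f"
proof (induction rule: rf.induct)
  case (rf_inv f) then show ?case by (auto intro!: rf.rf_inv)
next
  case (rf_cong f g) then show ?case by (blast intro: rf.rf_cong)
qed (auto intro: rf.intros)

lemma jr_subset: "jr U A \<Longrightarrow> V \<subseteq> U \<Longrightarrow> jr V A"
  by (auto simp: jr_def intro: rf_subset)

lemma rf_L: "jr U A \<Longrightarrow> rf U (\<lambda>x. L00 (A x))" "jr U A \<Longrightarrow> rf U (\<lambda>x. L01 (A x))"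
  "jr U A \<Longrightarrow> rf U (\<lambda>x. L10 (A x))" "jr U A \<Longrightarrow> rf U (\<lambda>x. L11 (A x))"
  by (simp_all add: L00_def L01_def L10_def L11_def jrD)

lemma open_nz: "open U \<Longrightarrow> rf U d \<Longrightarrow> open {x\<in>U. d x \<noteq> 0}"
proof -
  assume U: "open U" and d: "rf U d"
  have "continuous_on U d" by (rule rf_cont[OF U d])
  then have "open (d -` (- {0}) \<inter> U)" using U continuous_on_open_vimage by blast
  moreover have "{x\<in>U. d x \<noteq> 0} = d -` (- {0}) \<inter> U" by auto
  ultimately show ?thesis by simp
qed

context fixes v1 v2 :: real
begin

lemma rf_cc: "jr U A \<Longrightarrow> rf U (\<lambda>x. cc0 v1 v2 (A x))" "jr U A \<Longrightarrow> rf U (\<lambda>x. cc1 v1 v2 (A x))"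
  unfolding cc0_def cc1_def by (intro rf_add rf_mul rf_L rf_const; assumption)+

lemma rf_nn: "jr U A \<Longrightarrow> rf U (\<lambda>x. nn v1 v2 (A x))"
  unfolding nn_def by (intro rf_add rf_mul rf_cc)

lemma rf_om: "jr U A \<Longrightarrow> rf U (\<lambda>x. om1 v1 v2 (A x))" "jr U A \<Longrightarrow> rf U (\<lambda>x. om2 v1 v2 (A x))"
  unfolding om1_def om2_def by (intro rf_add rf_mul rf_L rf_cc; assumption)+

lemma rf_WW: "jr U A \<Longrightarrow> rf U (\<lambda>x. WW v1 v2 (A x))"
  unfolding WW_def by (intro rf_add rf_mul rf_om)

lemma jr_Mj: "jr U A \<Longrightarrow> jr U (\<lambda>x. Mj v1 v2 (A x))"
  unfolding Mj_def by (intro jr_lj rf_cc rf_minus)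

lemma jr_Minvj: "jr U A \<Longrightarrow> \<forall>x\<in>U. nn v1 v2 (A x) \<noteq> 0 \<Longrightarrow> jr U (\<lambda>x. Minvj v1 v2 (A x))"
  unfolding Minvj_def by (intro jr_lj rf_divide rf_cc rf_minus rf_nn)

lemma jr_Tj: "jr U A \<Longrightarrow> \<forall>x\<in>U. nn v1 v2 (A x) \<noteq> 0 \<Longrightarrow> jr U (\<lambda>x. Tj v1 v2 (A x))"
  unfolding Tj_def by (intro jr_lj rf_divide rf_om rf_minus rf_nn)

lemma jr_Tinvj: "jr U A \<Longrightarrow> \<forall>x\<in>U. nn v1 v2 (A x) \<noteq> 0 \<Longrightarrow> jr U (\<lambda>x. Tinvj v1 v2 (A x))"
  unfolding Tinvj_def using WW_nz
  by (intro jr_lj rf_divide rf_om rf_minus rf_nn rf_WW rf_mul) auto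

lemma jr_pp: "jr U (\<lambda>e. pp e)"
  unfolding pp_def
  by (intro jr_jcomp jr_lin bounded_linear_fst bounded_linear_snd
      bounded_linear_compose[OF bounded_linear_fst bounded_linear_snd]
      bounded_linear_compose[OF bounded_linear_snd bounded_linear_snd])

definition V1 :: "(jet \<times> jet \<times> jet) set" where "V1 = {e\<in>UNIV. nn v1 v2 (pp e) \<noteq> 0}"

lemma open_V1: "open V1"
  unfolding V1_def by (intro open_nz rf_nn jr_pp) simp

lemma vf_hh: "vf V1 (hh v1 v2)"
proof -
  have n: "\<forall>x\<in>V1. nn v1 v2 (pp x) \<noteq> 0" by (simp add: V1_def)
  have j1: "jr V1 (\<lambda>e. jcomp (Minvj v1 v2 (pp e)) (fst e))"
    by (intro jr_jcomp jr_Minvj jr_pp n jr_lin bounded_linear_fst)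
  have j2: "jr V1 (\<lambda>e. jpair I0 (jcomp (snd (snd e)) (Tinvj v1 v2 (pp e))))"
    by (intro jr_jpair jr_const jr_jcomp jr_Tinvj jr_pp n jr_lin
        bounded_linear_compose[OF bounded_linear_snd bounded_linear_snd])
  show ?thesis unfolding hh_def
    by (intro vf_pair jr_vf jr_pp j1 j2 vf_const)
qed

lemma S_V1: "Sset v1 v2 \<subseteq> V1"
  by (auto simp: Sset_def Uset_def V1_def)

definition V1' :: "(jet \<times> jet \<times> jet \<times> jet) set" where
  "V1' = {y\<in>UNIV. nn v1 v2 (fst y) \<noteq> 0 \<and> Dj (rphi v1 v2 y) \<noteq> 0}"

lemma jr_rphi: "jr U (rphi v1 v2)"
  unfolding rphi_def
  by (intro jr_jcomp jr_Mj jr_lin bounded_linear_fst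
      bounded_linear_compose[OF bounded_linear_fst bounded_linear_snd])

lemma open_V1': "open V1'"
proof -
  have "V1' = {y\<in>{y\<in>UNIV. nn v1 v2 (fst y) \<noteq> 0}. Dj (rphi v1 v2 y) \<noteq> 0}"
    by (auto simp: V1'_def)
  moreover have "open {y\<in>UNIV. nn v1 v2 (fst (y::jet \<times> jet \<times> jet \<times> jet)) \<noteq> 0}"
    by (rule open_nz[OF open_UNIV rf_nn[OF jr_lin[OF bounded_linear_fst]]])
  ultimately show ?thesis
    using open_nz[OF _ rf_Dj[OF jr_rphi], of "{y\<in>UNIV. nn v1 v2 (fst (y::jet \<times> jet \<times> jet \<times> jet)) \<noteq> 0}"]
    by (simp only:)
qed

lemma V1'_nn: "\<forall>y\<in>V1'. nn v1 v2 (fst y) \<noteq> 0" and V1'_D: "\<forall>y\<in>V1'. Dj (rphi v1 v2 y) \<noteq> 0"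
  by (auto simp: V1'_def)

lemma jr_rk: "jr V1' (rk v1 v2)"
  unfolding rk_def
  by (intro jr_jcomp jr_jinv jr_rphi V1'_D jr_lin bounded_linear_fst)

lemma jr_rpsi: "jr V1' (rpsi v1 v2)"
  unfolding rpsi_def
  by (intro jr_jpair jr_rk jr_jcomp jr_Tj V1'_nn jr_lin bounded_linear_fst
      bounded_linear_compose[OF bounded_linear_snd bounded_linear_compose[OF bounded_linear_snd bounded_linear_snd]])

definition V2 :: "(jet \<times> jet \<times> jet \<times> jet) set" where
  "V2 = {y\<in>V1'. Dj (rpsi v1 v2 y) \<noteq> 0}"

lemma open_V2: "open V2"
  unfolding V2_def by (intro open_nz open_V1' rf_Dj jr_rpsi)

lemma vf_rr: "vf V2 (rr v1 v2)"
proof -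
  have sub: "V2 \<subseteq> V1'" by (auto simp: V2_def)
  have D: "\<forall>y\<in>V2. Dj (rpsi v1 v2 y) \<noteq> 0" by (simp add: V2_def)
  have a: "jr V2 (rphi v1 v2)" by (rule jr_rphi)
  have b: "jr V2 (\<lambda>y. jpair I0 (jcomp (rk v1 v2 y) (jinv (rpsi v1 v2 y))))"
    by (intro jr_jpair jr_const jr_jcomp jr_subset[OF jr_rk sub] jr_jinv jr_subset[OF jr_rpsi sub] D)
  have c: "jr V2 (rpsi v1 v2)" by (rule jr_subset[OF jr_rpsi sub])
  show ?thesis unfolding rr_def by (intro vf_pair jr_vf a b c)
qed

lemma T_V2: "Uset v1 v2 \<times> Fset \<subseteq> V2"
proof
  fix y assume y: "y \<in> Uset v1 v2 \<times> Fset"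
  note F = rr_facts[OF y]
  show "y \<in> V2" using F by (simp add: V2_def V1'_def)
qed

end


lemma exists_v: "b \<in> J1 \<Longrightarrow> \<exists>v1 v2. nn v1 v2 b \<noteq> 0"
proof -
  assume b: "b \<in> J1"
  then have nz: "\<not> (L00 b = 0 \<and> L01 b = 0 \<and> L10 b = 0 \<and> L11 b = 0)" by (simp add: J1_iff)
  show ?thesis
  proof (cases "L00 b = 0 \<and> L10 b = 0")
    case True
    then have "nn 0 1 b \<noteq> 0" using nz sum_squares_eq_zero_iff by (auto simp: nn_def cc0_def cc1_def)
    then show ?thesis by blast
  next
    case False
    then have "nn 1 0 b \<noteq> 0" using sum_squares_eq_zero_iff by (auto simp: nn_def cc0_def cc1_def)
    then show ?thesis by blast
  qed
qed

lemma I0_F: "(I0, 0, I0) \<in> Fset"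
  by (simp add: Fset_def Gjet_iff Dj_L jpair_same)

lemma pfun_eq: "(\<lambda>(\<phi>, f, \<psi>). jcomp \<phi> (jcomp f \<psi>)) = pp"
  by (auto simp: pp_def fun_eq_iff)

theorem lemma2p2:
  shows "fiber_bundle (Gjet \<times> Njet \<times> Gjet) J1
           (\<lambda>(\<phi>, f, \<psi>). jcomp \<phi> (jcomp f \<psi>))"
  unfolding pfun_eq fiber_bundle_def
proof (intro conjI ballI)
  let ?E = "Gjet \<times> Njet \<times> Gjet"
  show "pp ` ?E = J1"
  proof
    show "pp ` ?E \<subseteq> J1" using pp_J1 by blast
    show "J1 \<subseteq> pp ` ?E"
    proof
      fix b assume b: "b \<in> J1"
      obtain v1 v2 where n: "nn v1 v2 b \<noteq> 0" using exists_v[OF b] by blast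
      have y: "(b, I0, 0, I0) \<in> Uset v1 v2 \<times> Fset" using b n I0_F by (simp add: Uset_def)
      have "rr v1 v2 (b, I0, 0, I0) \<in> ?E" using rr_in[OF y] by (simp add: Sset_def)
      moreover have "pp (rr v1 v2 (b, I0, 0, I0)) = b" using pp_rr[OF y] by simp
      ultimately show "b \<in> pp ` ?E" by force
    qed
  qed
  show "smooth_map ?E pp"
    by (rule smooth_mapI[of UNIV]) (auto intro: jr_vf jr_pp)
  fix b assume b: "b \<in> J1"
  obtain v1 v2 where n: "nn v1 v2 b \<noteq> 0" using exists_v[OF b] by blast
  have SE: "?E \<inter> pp -` Uset v1 v2 = Sset v1 v2" by (auto simp: Sset_def)
  have op: "open {g. nn v1 v2 g \<noteq> 0}"
    using open_nz[OF open_UNIV rf_nn[OF jr_lin[OF bounded_linear_ident]], of v1 v2] by simp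
  have Uo: "openin (top_of_set J1) (Uset v1 v2)"
  proof -
    have "Uset v1 v2 = J1 \<inter> {g. nn v1 v2 g \<noteq> 0}" by (auto simp: Uset_def)
    then show ?thesis using openin_open_Int[OF op] by simp
  qed
  have bU: "b \<in> Uset v1 v2" using b n by (simp add: Uset_def)
  have inj: "inj_on (hh v1 v2) (Sset v1 v2)"
  proof (rule inj_onI)
    fix x y assume x: "x \<in> Sset v1 v2" and y: "y \<in> Sset v1 v2" and e: "hh v1 v2 x = hh v1 v2 y"
    have "x = rr v1 v2 (hh v1 v2 x)" using rr_hh[OF x] by simp
    also have "\<dots> = rr v1 v2 (hh v1 v2 y)" using e by simp
    also have "\<dots> = y" using rr_hh[OF y] .
    finally show "x = y" .
  qed
  have img: "hh v1 v2 ` Sset v1 v2 = Uset v1 v2 \<times> Fset"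
  proof
    show "hh v1 v2 ` Sset v1 v2 \<subseteq> Uset v1 v2 \<times> Fset" using hh_in by blast
    show "Uset v1 v2 \<times> Fset \<subseteq> hh v1 v2 ` Sset v1 v2"
    proof
      fix y assume y: "y \<in> Uset v1 v2 \<times> Fset"
      have "y = hh v1 v2 (rr v1 v2 y)" using hh_rr[OF y] by simp
      then show "y \<in> hh v1 v2 ` Sset v1 v2"
        using rr_in[OF y] by (rule image_eqI)
    qed
  qed
  have bij: "bij_betw (hh v1 v2) (Sset v1 v2) (Uset v1 v2 \<times> Fset)"
    using inj img by (simp add: bij_betw_def)
  have sm1: "smooth_map (Sset v1 v2) (hh v1 v2)"
    by (rule smooth_mapI[OF open_V1 S_V1 vf_hh]) simp
  have sm2: "smooth_map (Uset v1 v2 \<times> Fset) (inv_into (Sset v1 v2) (hh v1 v2))"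
  proof (rule smooth_mapI[OF open_V2 T_V2 vf_rr])
    fix y assume y: "y \<in> Uset v1 v2 \<times> Fset"
    show "rr v1 v2 y = inv_into (Sset v1 v2) (hh v1 v2) y"
      by (rule inv_into_f_eq[OF inj rr_in[OF y] hh_rr[OF y], symmetric])
  qed
  have fst: "\<forall>e\<in>?E \<inter> pp -` Uset v1 v2. fst (hh v1 v2 e) = pp e" by (simp add: hh_def)
  show "\<exists>U (F::(jet \<times> jet \<times> jet) set) h. openin (top_of_set J1) U \<and> b \<in> U \<and>
          diffeo_betw (?E \<inter> pp -` U) (U \<times> F) h \<and> (\<forall>e\<in>?E \<inter> pp -` U. fst (h e) = pp e)"
  proof (rule exI[of _ "Uset v1 v2"], rule exI[of _ "Fset :: (jet \<times> jet \<times> jet) set"], rule exI[of _ "hh v1 v2"], intro conjI)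
    show "openin (top_of_set J1) (Uset v1 v2)" by (rule Uo)
    show "b \<in> Uset v1 v2" by (rule bU)
    show "diffeo_betw (?E \<inter> pp -` Uset v1 v2) (Uset v1 v2 \<times> Fset) (hh v1 v2)"
      unfolding SE diffeo_betw_def using bij sm1 sm2 by simp
    show "\<forall>e\<in>?E \<inter> pp -` Uset v1 v2. fst (hh v1 v2 e) = pp e" by (rule fst)
  qed
qed


end
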